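(* Let $\mathbb F$ be algebraically closed and $A(s),B(s)\in\mathbb F[s]^{p\times q}$ pencils, with ranks $\rho_1,\rho_2$, $\rho=\min\{\rho_1,\rho_2\}$, homogeneous invariant factors $\phi_1\mid\cdots\mid\phi_{\rho_1}$ of $A(s)$ and $\psi_1\mid\cdots\mid\psi_{\rho_2}$ of $B(s)$, column minimal indices $c_1\ge\dots\ge c_{q-\rho_1}$ of $A$ and $d_1\ge\dots\ge d_{q-\rho_2}$ of $B$, row minimal indices $u_1\ge\dots\ge u_{p-\rho_1}$ of $A$ and $v_1\ge\dots\ge v_{p-\rho_2}$ of $B$. Let $(r_1,\dots),(s_1,\dots),(r'_1,\dots),(s'_1,\dots)$ be the conjugate partitions of $(c_i),(d_i),(u_i),(v_i)$, $r_0=q-\rho_1$, $s_0=q-\rho_2$, $r'_0=p-\rho_1$, $s'_0=p-\rho_2$, $\mathbf r=(r_0,r_1,\dots)$, $\mathbf s=(s_0,s_1,\dots)$, $\mathbf r'=(r'_0,r'_1,\dots)$, $\mathbf s'=(s'_0,s'_1,\dots)$. Assume $\mathbf r\ne\mathbf s$, $\mathbf r'=\mathbf s'$, and $$G\le\sum_{i=1}^\rho\min\{r_i,s_i\}+\max\{e,e'\},$$ where $x=\min\{i: r_i\ne s_i\}$, $e=\min\{i\ge x-1: s_{i+1}\ge r_{i+1}\}$, $e'=\min\{i\ge x-1: r_{i+1}\ge s_{i+1}\}$, $G=\rho-1-\sum_{i=1}^{\rho-1}\deg\gcd(\phi_{i+1},\psi_{i+1})-\sum_{i=1}^{\rho}r'_i$.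 Consider the conditions (D$\phi$): $\phi_j\mid\psi_j$ for $1\le j\le\rho$; (D$\psi$): $\psi_j\mid\phi_j$ for $1\le j\le\rho$. Then: 1. If $e>e'$: (a) for $i\in\{x,\dots,e\}$, $-x-1\le s_i-r_i\le-1$, and if $s_i-r_i=-x-1$ then (D$\phi$) holds; (b) for $i>e$, $-x\le s_i-r_i\le e+1$, and if $s_i-r_i=e+1$ then (D$\psi$) holds. 2. If $e'>e$: (a) for $i\in\{x,\dots,e'\}$, $-x-1\le r_i-s_i\le-1$, and if $r_i-s_i=-x-1$ then (D$\psi$) holds; (b) for $i>e'$, $-x\le r_i-s_i\le e'+1$, and if $r_i-s_i=e'+1$ then (D$\phi$) holds.
   Context: A pencil $A(s)=A_0+sA_1$ has rank equal to its rank over $\mathbb F(s)$. Homogeneous invariant factors are the invariant factors (homogeneous polynomials in $\mathbb F[s,t]$) of $tA_0+sA_1$, with conventions $\phi_i=1$ for $i<1$, $\phi_i=0$ for $i>\rho_1$ (similarly $\psi_i$). Column (row) minimal indices are the indices $k$ of the blocks $L_k(s)\in\mathbb F[s]^{k\times(k+1)}$ ($s$ on the diagonal, $1$ on superdiagonal), resp. $L_k(s)^T$, in the Kronecker canonical form, $q-\rho$ (resp. $p-\rho$) of them counting zeros. Conjugate of $(a_1,\dots,a_n)$ nonincreasing nonnegative: $(\bar a_1,\bar a_2,\dots)$, $\bar a_k=\#\{i:a_i\ge k\}$. *)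

theory Defs
  imports "HOL-Computational_Algebra.Polynomial_Factorial"
          "Jordan_Normal_Form.Determinant"
          "Jordan_Normal_Form.DL_Submatrix"
begin

text \<open>A pencil A(s) = A0 + s A1 is represented by the pair (A0, A1) of constant matrices.\<close>

type_synonym 'a pencil = "'a mat \<times> 'a mat"

definition is_pencil :: "nat \<Rightarrow> nat \<Rightarrow> 'a pencil \<Rightarrow> bool" where
  "is_pencil p q A \<longleftrightarrow> fst A \<in> carrier_mat p q \<and> snd A \<in> carrier_mat p q"

definition pencil_poly :: "'a::comm_ring_1 pencil \<Rightarrow> 'a poly mat" where
  "pencil_poly A = mat (dim_row (fst A)) (dim_col (fst A))
     (\<lambda>(i,j). [: fst A $$ (i,j), snd A $$ (i,j) :])"

text \<open>The homogeneous matrix t A0 + s A1 over F[s,t], where F[s,t] is represented as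
  (F[s])[t]: the outer polynomial variable is t, the inner one is s.\<close>
definition hom_pencil :: "'a::comm_ring_1 pencil \<Rightarrow> 'a poly poly mat" where
  "hom_pencil A = mat (dim_row (fst A)) (dim_col (fst A))
     (\<lambda>(i,j). [: [:0, snd A $$ (i,j):], [: fst A $$ (i,j) :] :])"

definition minors :: "'b::comm_ring_1 mat \<Rightarrow> nat \<Rightarrow> 'b set" where
  "minors M k = {det (submatrix M I J) | I J. I \<subseteq> {..<dim_row M} \<and> J \<subseteq> {..<dim_col M}
                    \<and> card I = k \<and> card J = k}"

definition pencil_rank :: "'a::comm_ring_1 pencil \<Rightarrow> nat" where
  "pencil_rank A = Max {k. \<exists>m \<in> minors (pencil_poly A) k. m \<noteq> 0}"

definition det_divisor :: "'b::{comm_ring_1,factorial_semiring_gcd} mat \<Rightarrow> nat \<Rightarrow> 'b" where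
  "det_divisor M k = Gcd (minors M k)"

text \<open>Homogeneous invariant factors phi_k of t A0 + s A1, with phi_k = 1 for k < 1 and
  phi_k = 0 for k > rank.\<close>
definition hom_inv_factor ::
  "'a::{field_gcd} pencil \<Rightarrow> nat \<Rightarrow> 'a poly poly" where
  "hom_inv_factor A k =
     (if k < 1 then 1
      else if k > pencil_rank A then 0
      else det_divisor (hom_pencil A) k div det_divisor (hom_pencil A) (k - 1))"

definition tdeg :: "'a::zero poly poly \<Rightarrow> nat" where
  "tdeg f = Max (insert 0 {i + degree (coeff f i) | i. coeff f i \<noteq> 0})"

definition diag_pencil :: "'a::zero pencil \<Rightarrow> 'a pencil \<Rightarrow> 'a pencil" where
  "diag_pencil A B =
    (four_block_mat (fst A) (0\<^sub>m (dim_row (fst A)) (dim_col (fst B)))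
                    (0\<^sub>m (dim_row (fst B)) (dim_col (fst A))) (fst B),
     four_block_mat (snd A) (0\<^sub>m (dim_row (snd A)) (dim_col (snd B)))
                    (0\<^sub>m (dim_row (snd B)) (dim_col (snd A))) (snd B))"

text \<open>L_k(s): k x (k+1), s on the diagonal, 1 on the superdiagonal.\<close>
definition L_block :: "nat \<Rightarrow> 'a::{zero,one} pencil" where
  "L_block k = (mat k (k+1) (\<lambda>(i,j). if j = i + 1 then 1 else 0),
                mat k (k+1) (\<lambda>(i,j). if j = i then 1 else 0))"

definition LT_block :: "nat \<Rightarrow> 'a::{zero,one} pencil" where
  "LT_block k = (transpose_mat (fst (L_block k)), transpose_mat (snd (L_block k)))"

definition regular_pencil :: "'a::comm_ring_1 pencil \<Rightarrow> bool" where
  "regular_pencil R \<longleftrightarrow> (\<exists>n. is_pencil n n R) \<and> det (pencil_poly R) \<noteq> 0"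

text \<open>c (column minimal indices) and u (row minimal indices) are the minimal indices of the
  p x q pencil A: A is strictly equivalent to its Kronecker canonical form
  diag(L_{c_1},...,L_{c_m}, L_{u_1}^T, ..., L_{u_n}^T, regular part).\<close>
definition kcf_minimal_indices ::
  "nat \<Rightarrow> nat \<Rightarrow> 'a::field pencil \<Rightarrow> nat list \<Rightarrow> nat list \<Rightarrow> bool" where
  "kcf_minimal_indices p q A c u \<longleftrightarrow>
     (\<exists>P Q R. P \<in> carrier_mat p p \<and> invertible_mat P \<and>
              Q \<in> carrier_mat q q \<and> invertible_mat Q \<and> regular_pencil R \<and>
              (P * fst A * Q, P * snd A * Q) =
                foldr diag_pencil (map L_block c @ map LT_block u) R)"

definition conj_part :: "nat list \<Rightarrow> nat \<Rightarrow> nat" where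
  "conj_part a k = length (filter (\<lambda>y. k \<le> y) a)"

end

theory Submission
  imports Defs
begin

definition selR :: "nat set \<Rightarrow> nat \<Rightarrow> 'b::comm_ring_1 mat" where
  "selR I m = mat (card I) m (\<lambda>(i,k). if k = pick I i then 1 else 0)"
definition selC :: "nat set \<Rightarrow> nat \<Rightarrow> 'b::comm_ring_1 mat" where
  "selC J n = mat n (card J) (\<lambda>(k,j). if k = pick J j then 1 else 0)"

lemma card_sub_lt: "I \<subseteq> {..<m} \<Longrightarrow> {i. i < m \<and> i \<in> I} = I" by auto

lemma pick_lt: assumes "I \<subseteq> {..<m}" "i < card I" shows "pick I i < m"
proof -
  have "finite I" using assms(1) finite_subset by blast
  then have "pick I i \<in> I" using assms(2) pick_in_set by blast
  then show ?thesis using assms(1) by auto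
qed

lemma sum_delta_mult: assumes c: "(c::nat) < m" shows "(\<Sum>l<m. (if l = c then (1::'b::comm_ring_1) else 0) * g l) = g c"
proof -
  have "(\<Sum>l<m. (if l = c then (1::'b) else 0) * g l) = (\<Sum>l<m. if l = c then g l else 0)" by (rule sum.cong) auto
  also have "\<dots> = g c" using c by simp
  finally show ?thesis .
qed

lemma sum_delta_mult': assumes c: "(c::nat) < m" shows "(\<Sum>l<m. g l * (if l = c then (1::'b::comm_ring_1) else 0)) = g c"
proof -
  have "(\<Sum>l<m. g l * (if l = c then (1::'b) else 0)) = (\<Sum>l<m. if l = c then g l else 0)" by (rule sum.cong) auto
  also have "\<dots> = g c" using c by simp
  finally show ?thesis .
qed

lemma submatrix_sel:
  assumes M: "(M :: 'b::comm_ring_1 mat) \<in> carrier_mat m n" and I: "I \<subseteq> {..<m}" and J: "J \<subseteq> {..<n}"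
  shows "submatrix M I J = selR I m * M * selC J n"
proof (rule eq_matI)
  have dI: "card {i. i < dim_row M \<and> i \<in> I} = card I" using M card_sub_lt[OF I] by simp
  have dJ: "card {i. i < dim_col M \<and> i \<in> J} = card J" using M card_sub_lt[OF J] by simp
  show "dim_row (submatrix M I J) = dim_row (selR I m * M * selC J n)"
    using dI by (simp add: dim_submatrix selR_def)
  show "dim_col (submatrix M I J) = dim_col (selR I m * M * selC J n)"
    using dJ by (simp add: dim_submatrix selC_def)
  fix i j assume i: "i < dim_row (selR I m * M * selC J n)" and j: "j < dim_col (selR I m * M * selC J n)"
  then have i': "i < card I" and j': "j < card J" by (auto simp: selR_def selC_def)
  have pi: "pick I i < m" using pick_lt[OF I i'] .
  have pj: "pick J j < n" using pick_lt[OF J j'] .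
  have "(selR I m * M * selC J n) $$ (i,j) = (\<Sum>l<n. (selR I m * M) $$ (i,l) * selC J n $$ (l,j))"
    using i j M by (simp add: selR_def selC_def scalar_prod_def atLeast0LessThan)
  also have "\<dots> = (\<Sum>l<n. M $$ (pick I i, l) * (if l = pick J j then 1 else 0))"
  proof (rule sum.cong[OF refl])
    fix l assume l: "l \<in> {..<n}"
    have "(selR I m * M) $$ (i,l) = (\<Sum>k<m. (if k = pick I i then 1 else 0) * M $$ (k,l))"
      using i' l M by (simp add: selR_def scalar_prod_def atLeast0LessThan)
    also have "\<dots> = M $$ (pick I i, l)" using sum_delta_mult[OF pi] .
    finally show "(selR I m * M) $$ (i,l) * selC J n $$ (l,j) = M $$ (pick I i, l) * (if l = pick J j then 1 else 0)"
      using l j' by (simp add: selC_def)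
  qed
  also have "\<dots> = M $$ (pick I i, pick J j)" using sum_delta_mult'[OF pj] .
  finally have "(selR I m * M * selC J n) $$ (i,j) = M $$ (pick I i, pick J j)" .
  moreover have "submatrix M I J $$ (i,j) = M $$ (pick I i, pick J j)"
    by (rule submatrix_index) (use i' j' dI dJ in auto)
  ultimately show "submatrix M I J $$ (i, j) = (selR I m * M * selC J n) $$ (i, j)" by simp
qed


lemma det_rows_sel_dvd:
  fixes Y :: "'b::comm_ring_1 mat"
  assumes Y: "Y \<in> carrier_mat n k"
  and dv: "\<And>S. S \<subseteq> {..<n} \<Longrightarrow> card S = k \<Longrightarrow> d dvd det (submatrix Y S UNIV)"
  and f: "\<forall>i\<in>{0..<k}. f i \<in> {0..<n}"
  shows "d dvd det (mat\<^sub>r k k (\<lambda>i. row Y (f i)))"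
proof (cases "inj_on f {0..<k}")
  case False
  then obtain i j where ij: "f i = f j" "i \<noteq> j" "i < k" "j < k" unfolding inj_on_def by auto
  have r: "\<And>i. i < k \<Longrightarrow> row (mat\<^sub>r k k (\<lambda>i. row Y (f i))) i = row Y (f i)"
    by (rule row_mat_of_row_fun) (use Y in auto)
  have "row (mat\<^sub>r k k (\<lambda>i. row Y (f i))) i = row (mat\<^sub>r k k (\<lambda>i. row Y (f i))) j"
    by (simp only: r[OF ij(3)] r[OF ij(4)] ij(1))
  then have "det (mat\<^sub>r k k (\<lambda>i. row Y (f i))) = 0"
    by (rule det_identical_rows[OF mat_row_carrierI ij(2-4)])
  then show ?thesis by simp
next
  case True
  define S where "S = f ` {0..<k}"
  have Sn: "S \<subseteq> {..<n}" using f unfolding S_def by auto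
  have cS: "card S = k" unfolding S_def using card_image[OF True] by simp
  have finS: "finite S" unfolding S_def by simp
  define Z where "Z = submatrix Y S UNIV"
  have "{i. i < dim_row Y \<and> i \<in> S} = S" using Y card_sub_lt[OF Sn] by simp
  then have dZr: "card {i. i < dim_row Y \<and> i \<in> S} = k" using cS by simp
  have "{j. j < dim_col Y \<and> j \<in> (UNIV::nat set)} = {..<k}" using Y by auto
  then have dZc: "card {j. j < dim_col Y \<and> j \<in> (UNIV::nat set)} = k" by simp
  have Zr: "dim_row Z = k" unfolding Z_def dim_submatrix(1) using dZr .
  have Zcl: "dim_col Z = k" unfolding Z_def dim_submatrix(2) using dZc .
  have Zc: "Z \<in> carrier_mat k k" using Zr Zcl by (rule carrier_matI)
  define g where "g = (\<lambda>i. if i < k then card {a\<in>S. a < f i} else i)"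
  have fS: "i < k \<Longrightarrow> f i \<in> S" for i unfolding S_def by auto
  have pg: "i < k \<Longrightarrow> pick S (g i) = f i" for i using pick_card_in_set[OF fS] unfolding g_def by simp
  have gk: "i < k \<Longrightarrow> g i < k" for i
  proof -
    assume i: "i < k"
    have "{a\<in>S. a < f i} \<subset> S" using fS[OF i] by auto
    then have "card {a\<in>S. a < f i} < card S" using finS psubset_card_mono by blast
    then show ?thesis using i cS unfolding g_def by simp
  qed
  have ginj: "inj_on g {0..<k}"
  proof (rule inj_onI)
    fix i j assume i: "i \<in> {0..<k}" and j: "j \<in> {0..<k}" and e: "g i = g j"
    then have "f i = f j" using pg[of i] pg[of j] by auto
    then show "i = j" using True i j unfolding inj_on_def by blast
  qed
  have gp: "g permutes {0..<k}"
  proof -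
    have gS: "g \<in> {0..<k} \<rightarrow> {0..<k}" using gk by auto
    have gout: "\<And>i. i \<notin> {0..<k} \<Longrightarrow> g i = i" unfolding g_def by auto
    show ?thesis by (rule inj_on_nat_permutes[OF ginj gS _ gout]) simp
  qed
  have eq: "mat\<^sub>r k k (\<lambda>i. row Y (f i)) = mat k k (\<lambda>(i, j). Z $$ (g i, j))"
  proof (rule eq_matI)
    fix i j assume i: "i < dim_row (mat k k (\<lambda>(i, j). Z $$ (g i, j)))" and j: "j < dim_col (mat k k (\<lambda>(i, j). Z $$ (g i, j)))"
    then have i': "i < k" and j': "j < k" by auto
    have "Z $$ (g i, j) = Y $$ (pick S (g i), pick UNIV j)"
      unfolding Z_def by (rule submatrix_index) (use gk[OF i'] j' dZr dZc in auto)
    also have "\<dots> = Y $$ (f i, j)" using pg[OF i'] pick_UNIV by simp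
    finally have zz: "Z $$ (g i, j) = Y $$ (f i, j)" .
    have "f i < n" using fS[OF i'] Sn by auto
    then show "mat\<^sub>r k k (\<lambda>i. row Y (f i)) $$ (i, j) = mat k k (\<lambda>(i, j). Z $$ (g i, j)) $$ (i, j)"
      using i' j' Y zz by simp
  next
    show "dim_row (mat\<^sub>r k k (\<lambda>i. row Y (f i))) = dim_row (mat k k (\<lambda>(i, j). Z $$ (g i, j)))" by simp
  next
    show "dim_col (mat\<^sub>r k k (\<lambda>i. row Y (f i))) = dim_col (mat k k (\<lambda>(i, j). Z $$ (g i, j)))" by simp
  qed
  have "det (mat\<^sub>r k k (\<lambda>i. row Y (f i))) = of_int (sign g) * det Z"
    unfolding eq by (rule det_permute_rows[OF Zc gp])
  moreover have "d dvd det Z" unfolding Z_def by (rule dv[OF Sn cS])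
  ultimately show ?thesis by simp
qed

lemma CB_dvd:
  fixes X Y :: "'b::comm_ring_1 mat"
  assumes X: "X \<in> carrier_mat k n" and Y: "Y \<in> carrier_mat n k"
  and dv: "\<And>S. S \<subseteq> {..<n} \<Longrightarrow> card S = k \<Longrightarrow> d dvd det (submatrix Y S UNIV)"
  shows "d dvd det (X * Y)"
proof -
  let ?U = "{0..<n}"
  let ?F = "{f. (\<forall>i\<in>{0..<k}. f i \<in> ?U) \<and> (\<forall>i. i \<notin> {0..<k} \<longrightarrow> f i = i)}"
  have fU: "finite ?U" by simp
  have "det (X * Y) = (\<Sum>f\<in>?F. det (mat\<^sub>r k k (\<lambda>i. X $$ (i, f i) \<cdot>\<^sub>v row Y (f i))))"
    unfolding mat_mul_finsum_alt[OF X Y]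
    by (rule det_linear_rows_sum[OF fU], insert X Y, auto)
  also have "d dvd \<dots>"
  proof (rule dvd_sum)
    fix f assume "f \<in> ?F"
    then have f: "\<forall>i\<in>{0..<k}. f i \<in> ?U" by auto
    have "det (mat\<^sub>r k k (\<lambda>i. X $$ (i, f i) \<cdot>\<^sub>v row Y (f i))) =
       prod (\<lambda>i. X $$ (i, f i)) {0..<k} * det (mat\<^sub>r k k (\<lambda>i. row Y (f i)))"
      by (rule det_rows_mul, insert Y f, auto)
    moreover have "d dvd det (mat\<^sub>r k k (\<lambda>i. row Y (f i)))"
      by (rule det_rows_sel_dvd[OF Y dv f])
    ultimately show "d dvd det (mat\<^sub>r k k (\<lambda>i. X $$ (i, f i) \<cdot>\<^sub>v row Y (f i)))" by simp
  qed
  finally show ?thesis .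
qed


lemma pick_lessThan: "j < n \<Longrightarrow> pick {..<n} j = j"
proof (induction j)
  case 0
  then show ?case by (auto intro!: Least_equality)
next
  case (Suc j)
  then have "pick {..<n} j = j" by simp
  then show ?case using Suc.prems by (auto intro!: Least_equality)
qed

lemma submatrix_carrier:
  assumes A: "A \<in> carrier_mat r c" and I: "I \<subseteq> {..<r}" and J: "J \<subseteq> {..<c}"
  shows "submatrix A I J \<in> carrier_mat (card I) (card J)"
proof -
  have h1: "{i. i < dim_row A \<and> i \<in> I} = I" using A I by auto
  have h2: "{i. i < dim_col A \<and> i \<in> J} = J" using A J by auto
  show ?thesis by (rule carrier_matI) (simp_all only: dim_submatrix h1 h2)
qed

lemma submatrix_carrier_UNIV_row:
  assumes A: "A \<in> carrier_mat r c" and J: "J \<subseteq> {..<c}"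
  shows "submatrix A UNIV J \<in> carrier_mat r (card J)"
proof -
  have h1: "{i. i < dim_row A \<and> i \<in> (UNIV::nat set)} = {..<r}" using A by auto
  have h2: "{i. i < dim_col A \<and> i \<in> J} = J" using A J by auto
  show ?thesis by (rule carrier_matI) (simp_all only: dim_submatrix h1 h2 card_lessThan)
qed

lemma submatrix_carrier_UNIV_col:
  assumes A: "A \<in> carrier_mat r c" and I: "I \<subseteq> {..<r}"
  shows "submatrix A I UNIV \<in> carrier_mat (card I) c"
proof -
  have h1: "{i. i < dim_col A \<and> i \<in> (UNIV::nat set)} = {..<c}" using A by auto
  have h2: "{i. i < dim_row A \<and> i \<in> I} = I" using A I by auto
  show ?thesis by (rule carrier_matI) (simp_all only: dim_submatrix h1 h2 card_lessThan)
qed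

lemma submatrix_UNIV_col:
  assumes A: "A \<in> carrier_mat r c"
  shows "submatrix A I UNIV = submatrix A I {..<c}"
proof -
  have e: "{j. j < dim_col A \<and> j \<in> (UNIV::nat set)} = {j. j < dim_col A \<and> j \<in> {..<c}}" using A by auto
  show ?thesis
  proof (rule eq_matI)
    fix i j assume i: "i < dim_row (submatrix A I {..<c})" and j: "j < dim_col (submatrix A I {..<c})"
    have i': "i < card {i. i < dim_row A \<and> i \<in> I}" using i by (simp add: dim_submatrix)
    have j': "j < card {j. j < dim_col A \<and> j \<in> {..<c}}" using j by (simp add: dim_submatrix)
    have jc: "j < c"
    proof -
      have "{j. j < dim_col A \<and> j \<in> {..<c}} = {..<c}" using A by auto
      then show ?thesis using j' by simp
    qed
    have "submatrix A I {..<c} $$ (i,j) = A $$ (pick I i, pick {..<c} j)"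
      by (rule submatrix_index[OF i' j'])
    moreover have "submatrix A I UNIV $$ (i,j) = A $$ (pick I i, pick UNIV j)"
      by (rule submatrix_index[OF i']) (use j' e in simp)
    ultimately show "submatrix A I UNIV $$ (i,j) = submatrix A I {..<c} $$ (i,j)"
      using pick_lessThan[OF jc] pick_UNIV by simp
  qed (use e in \<open>simp_all add: dim_submatrix\<close>)
qed

lemma submatrix_transpose_rows:
  "submatrix (transpose_mat X) T UNIV = transpose_mat (submatrix X UNIV T)"
proof (rule eq_matI)
  fix i j assume i: "i < dim_row (transpose_mat (submatrix X UNIV T))" and j: "j < dim_col (transpose_mat (submatrix X UNIV T))"
  have i': "i < card {i. i < dim_col X \<and> i \<in> T}" using i by (simp add: dim_submatrix)
  have j': "j < card {j. j < dim_row X \<and> j \<in> (UNIV::nat set)}" using j by (simp add: dim_submatrix)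
  have "submatrix (transpose_mat X) T UNIV $$ (i,j) = transpose_mat X $$ (pick T i, pick UNIV j)"
    by (rule submatrix_index) (use i' j' in simp_all)
  also have "\<dots> = X $$ (pick UNIV j, pick T i)"
  proof -
    have "pick T i < dim_col X" using pick_le[of i "dim_col X" T] i' by (simp add: conj_commute)
    moreover have "pick UNIV j < dim_row X" using j' pick_UNIV by simp
    ultimately show ?thesis by simp
  qed
  also have "\<dots> = submatrix X UNIV T $$ (j, i)"
    by (rule submatrix_index[symmetric]) (use i' j' in simp_all)
  finally show "submatrix (transpose_mat X) T UNIV $$ (i,j) = transpose_mat (submatrix X UNIV T) $$ (i,j)"
    using i j by simp
qed (simp_all add: dim_submatrix)

lemma CB_dvd_col:
  fixes X Y :: "'b::comm_ring_1 mat"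
  assumes X: "X \<in> carrier_mat k n" and Y: "Y \<in> carrier_mat n k"
  and dv: "\<And>T. T \<subseteq> {..<n} \<Longrightarrow> card T = k \<Longrightarrow> d dvd det (submatrix X UNIV T)"
  shows "d dvd det (X * Y)"
proof -
  have XY: "X * Y \<in> carrier_mat k k" using X Y by simp
  have "det (X * Y) = det (transpose_mat (X * Y))" using det_transpose[OF XY] by simp
  also have "transpose_mat (X * Y) = transpose_mat Y * transpose_mat X" by (rule transpose_mult[OF X Y])
  also have "d dvd det (transpose_mat Y * transpose_mat X)"
  proof (rule CB_dvd)
    show "transpose_mat Y \<in> carrier_mat k n" using Y by simp
    show "transpose_mat X \<in> carrier_mat n k" using X by simp
    fix T assume T: "T \<subseteq> {..<n}" "card T = k"
    have c: "submatrix X UNIV T \<in> carrier_mat k k"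
      using submatrix_carrier_UNIV_row[OF X T(1)] T(2) by simp
    have "det (submatrix (transpose_mat X) T UNIV) = det (submatrix X UNIV T)"
      unfolding submatrix_transpose_rows by (rule det_transpose[OF c])
    then show "d dvd det (submatrix (transpose_mat X) T UNIV)" using dv[OF T] by simp
  qed
  finally show ?thesis .
qed

lemma selR_lessThan: "selR {..<k} k = (1\<^sub>m k :: 'b::comm_ring_1 mat)"
  by (rule eq_matI) (auto simp: selR_def pick_lessThan)

lemma transpose_selR: "transpose_mat (selR I m) = (selC I m :: 'b::comm_ring_1 mat)"
  by (rule eq_matI) (auto simp: selR_def selC_def)
lemma transpose_selC: "transpose_mat (selC I m) = (selR I m :: 'b::comm_ring_1 mat)"
  by (rule eq_matI) (auto simp: selR_def selC_def)

lemma selR_carrier: "finite I \<Longrightarrow> selR I m \<in> carrier_mat (card I) m" by (simp add: selR_def)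
lemma selC_carrier: "selC J n \<in> carrier_mat n (card J)" by (simp add: selC_def)

lemma dvd_det_VMW:
  fixes M :: "'b::comm_ring_1 mat"
  assumes M: "M \<in> carrier_mat m n" and V: "V \<in> carrier_mat k m" and W: "W \<in> carrier_mat n k"
  and dv: "\<And>x. x \<in> minors M k \<Longrightarrow> d dvd x"
  shows "d dvd det (V * M * W)"
proof -
  have MW: "M * W \<in> carrier_mat m k" using M W by simp
  have "V * M * W = V * (M * W)" using V M W by (simp add: assoc_mult_mat)
  also have "d dvd det (V * (M * W))"
  proof (rule CB_dvd[OF V MW])
    fix S assume S: "S \<subseteq> {..<m}" "card S = k"
    have fS: "finite S" using S(1) finite_subset by blast
    have "submatrix (M * W) S UNIV = submatrix (M * W) S {..<k}" by (rule submatrix_UNIV_col[OF MW])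
    also have "\<dots> = selR S m * (M * W) * selC {..<k} k" by (rule submatrix_sel[OF MW S(1)]) simp
    also have "\<dots> = (selR S m * M) * (W * selC {..<k} k)"
    proof -
      have "selR S m * (M * W) = selR S m * M * W"
        by (rule assoc_mult_mat[symmetric]) (use M W selR_carrier[OF fS, of m] in auto)
      moreover have "selR S m * M * W * selC {..<k} k = selR S m * M * (W * selC {..<k} k)"
        by (rule assoc_mult_mat) (use M W selR_carrier[OF fS, of m] selC_carrier[of "{..<k}" k] in auto)
      ultimately show ?thesis by simp
    qed
    finally have e1: "submatrix (M * W) S UNIV = (selR S m * M) * (W * selC {..<k} k)" .
    have X1: "selR S m * M \<in> carrier_mat k n" using mult_carrier_mat[OF selR_carrier[OF fS, of m] M] S by simp
    have Y1: "W * selC {..<k} k \<in> carrier_mat n k" using mult_carrier_mat[OF W selC_carrier[of "{..<k}" k]] by simp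
    have "d dvd det ((selR S m * M) * (W * selC {..<k} k))"
    proof (rule CB_dvd_col[OF X1 Y1])
      fix T assume T: "T \<subseteq> {..<n}" "card T = k"
      have "submatrix (selR S m * M) UNIV T = transpose_mat (submatrix (transpose_mat (selR S m * M)) T UNIV)"
        by (simp add: submatrix_transpose_rows)
      also have "submatrix (transpose_mat (selR S m * M)) T UNIV = submatrix (transpose_mat (selR S m * M)) T {..<k}"
        by (rule submatrix_UNIV_col) (use X1 in simp)
      also have "\<dots> = selR T n * transpose_mat (selR S m * M) * selC {..<k} k"
        by (rule submatrix_sel[OF _ T(1)]) (use X1 in simp_all)
      finally have "submatrix (selR S m * M) UNIV T = transpose_mat (selR T n * transpose_mat (selR S m * M) * selC {..<k} k)" .
      also have "\<dots> = selR {..<k} k * (selR S m * M) * selC T n"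
      proof -
        have c1: "selR T n \<in> carrier_mat k n" using selR_carrier[of T n] T finite_subset[OF T(1)] by simp
        have c2: "transpose_mat (selR S m * M) \<in> carrier_mat n k" using X1 by simp
        have c3: "selC {..<k} k \<in> carrier_mat k k" using selC_carrier[of "{..<k}" k] by simp
        have "transpose_mat (selR T n * transpose_mat (selR S m * M) * selC {..<k} k)
            = transpose_mat (selC {..<k} k) * transpose_mat (selR T n * transpose_mat (selR S m * M))"
          by (rule transpose_mult[OF mult_carrier_mat[OF c1 c2] c3])
        also have "transpose_mat (selR T n * transpose_mat (selR S m * M)) = transpose_mat (transpose_mat (selR S m * M)) * transpose_mat (selR T n)"
          by (rule transpose_mult[OF c1 c2])
        also have "transpose_mat (selC {..<k} k) * (transpose_mat (transpose_mat (selR S m * M)) * transpose_mat (selR T n))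
           = selR {..<k} k * (selR S m * M) * selC T n"
          unfolding transpose_transpose transpose_selR transpose_selC
          by (rule assoc_mult_mat[symmetric, OF _ X1]) (use selR_carrier[of "{..<k}" k] selC_carrier[of T n] T in auto)
        finally show ?thesis .
      qed
      also have "\<dots> = selR S m * M * selC T n" using left_mult_one_mat[OF X1] by (simp add: selR_lessThan)
      also have "\<dots> = submatrix M S T" by (rule submatrix_sel[OF M S(1) T(1), symmetric])
      finally have "submatrix (selR S m * M) UNIV T = submatrix M S T" .
      moreover have "det (submatrix M S T) \<in> minors M k"
        unfolding minors_def using M S T by auto
      ultimately show "d dvd det (submatrix (selR S m * M) UNIV T)" using dv by simp
    qed
    then show "d dvd det (submatrix (M * W) S UNIV)" using e1 by simp
  qed
  finally show ?thesis .
qed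


definition rowsel :: "(nat \<Rightarrow> nat) \<Rightarrow> nat \<Rightarrow> nat \<Rightarrow> 'b::comm_ring_1 mat" where
  "rowsel f m' m = mat m' m (\<lambda>(r,c). if c = f r then 1 else 0)"
definition colsel :: "(nat \<Rightarrow> nat) \<Rightarrow> nat \<Rightarrow> nat \<Rightarrow> 'b::comm_ring_1 mat" where
  "colsel g n n' = mat n n' (\<lambda>(c,j). if c = g j then 1 else 0)"

lemma rowsel_carrier: "rowsel f m' m \<in> carrier_mat m' m" by (simp add: rowsel_def)
lemma colsel_carrier: "colsel g n n' \<in> carrier_mat n n'" by (simp add: colsel_def)

lemma sel_prod:
  assumes Z: "(Z :: 'b::comm_ring_1 mat) \<in> carrier_mat m n"
  and f: "\<And>r. r < m' \<Longrightarrow> f r < m" and g: "\<And>j. j < n' \<Longrightarrow> g j < n"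
  shows "rowsel f m' m * Z * colsel g n n' = mat m' n' (\<lambda>(r,j). Z $$ (f r, g j))"
proof (rule eq_matI)
  fix i j assume i: "i < dim_row (mat m' n' (\<lambda>(r,j). Z $$ (f r, g j)))" and j: "j < dim_col (mat m' n' (\<lambda>(r,j). Z $$ (f r, g j)))"
  then have i': "i < m'" and j': "j < n'" by auto
  have "(rowsel f m' m * Z * colsel g n n') $$ (i,j) = (\<Sum>l<n. (rowsel f m' m * Z) $$ (i,l) * colsel g n n' $$ (l,j))"
    using i' j' Z by (simp add: rowsel_def colsel_def scalar_prod_def atLeast0LessThan)
  also have "\<dots> = (\<Sum>l<n. Z $$ (f i, l) * (if l = g j then 1 else 0))"
  proof (rule sum.cong[OF refl])
    fix l assume l: "l \<in> {..<n}"
    have "(rowsel f m' m * Z) $$ (i,l) = (\<Sum>k<m. (if k = f i then 1 else 0) * Z $$ (k,l))"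
      using i' l Z by (simp add: rowsel_def scalar_prod_def atLeast0LessThan)
    also have "\<dots> = Z $$ (f i, l)" using sum_delta_mult[OF f[OF i']] .
    finally show "(rowsel f m' m * Z) $$ (i,l) * colsel g n n' $$ (l,j) = Z $$ (f i, l) * (if l = g j then 1 else 0)"
      using l j' by (simp add: colsel_def)
  qed
  also have "\<dots> = Z $$ (f i, g j)" using sum_delta_mult'[OF g[OF j']] .
  finally show "(rowsel f m' m * Z * colsel g n n') $$ (i,j) = mat m' n' (\<lambda>(r,j). Z $$ (f r, g j)) $$ (i,j)"
    using i' j' by simp
qed (auto simp: rowsel_def colsel_def)

lemma mat_delete_sel:
  assumes Z: "(Z :: 'b::comm_ring_1 mat) \<in> carrier_mat k k" and j: "j < k"
  shows "mat_delete Z 0 j = rowsel Suc (k-1) k * Z * colsel (\<lambda>j'. if j' < j then j' else Suc j') k (k-1)"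
proof -
  have "rowsel Suc (k-1) k * Z * colsel (\<lambda>j'. if j' < j then j' else Suc j') k (k-1)
      = mat (k-1) (k-1) (\<lambda>(r,j'). Z $$ (Suc r, if j' < j then j' else Suc j'))"
    by (rule sel_prod[OF Z]) auto
  also have "\<dots> = mat_delete Z 0 j" unfolding mat_delete_def using Z by auto
  finally show ?thesis by simp
qed

lemma assoc5:
  assumes A: "A \<in> carrier_mat n1 n2" and B: "B \<in> carrier_mat n2 n3" and C: "C \<in> carrier_mat n3 n4"
  and D: "D \<in> carrier_mat n4 n5" and E: "E \<in> carrier_mat n5 n6"
  shows "A * (B * C * D) * E = (A * B) * C * (D * E)"
proof -
  have "B * C * D = B * (C * D)" by (rule assoc_mult_mat[OF B C D])
  then have "A * (B * C * D) = A * (B * (C * D))" by simp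
  also have "\<dots> = A * B * (C * D)" by (rule assoc_mult_mat[symmetric, OF A B mult_carrier_mat[OF C D]])
  also have "\<dots> = A * B * C * D" by (rule assoc_mult_mat[symmetric, OF mult_carrier_mat[OF A B] C D])
  finally have "A * (B * C * D) * E = A * B * C * D * E" by simp
  also have "\<dots> = A * B * C * (D * E)"
    by (rule assoc_mult_mat[OF mult_carrier_mat[OF mult_carrier_mat[OF A B] C] D E])
  finally show ?thesis .
qed

lemma minor_eq_sel:
  assumes M: "M \<in> carrier_mat m n" and x: "x \<in> minors M k"
  shows "\<exists>V W. V \<in> carrier_mat k m \<and> W \<in> carrier_mat n k \<and> x = det (V * M * W)"
proof -
  from x obtain I J where x: "x = det (submatrix M I J)" and I: "I \<subseteq> {..<m}" and J: "J \<subseteq> {..<n}"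
    and cI: "card I = k" and cJ: "card J = k"
    unfolding minors_def using M by auto
  have fI: "finite I" using I finite_subset by blast
  have "x = det (selR I m * M * selC J n)" using x submatrix_sel[OF M I J] by simp
  moreover have "selR I m \<in> carrier_mat k m" using selR_carrier[OF fI, of m] cI by simp
  moreover have "selC J n \<in> carrier_mat n k" using selC_carrier[of J n] cJ by simp
  ultimately show ?thesis by blast
qed

lemma minors_dvd_step:
  fixes M :: "'b::comm_ring_1 mat"
  assumes M: "M \<in> carrier_mat m n" and k: "k > 0"
  and dv: "\<And>y. y \<in> minors M (k-1) \<Longrightarrow> d dvd y"
  and x: "x \<in> minors M k"
  shows "d dvd x"
proof -
  obtain V W where V: "V \<in> carrier_mat k m" and W: "W \<in> carrier_mat n k" and xe: "x = det (V * M * W)"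
    using minor_eq_sel[OF M x] by blast
  define Z where "Z = V * M * W"
  have Z: "Z \<in> carrier_mat k k" unfolding Z_def using V M W by auto
  have "det Z = (\<Sum>j<k. Z $$ (0,j) * cofactor Z 0 j)" by (rule laplace_expansion_row[OF Z k])
  also have "d dvd \<dots>"
  proof (rule dvd_sum)
    fix j assume j: "j \<in> {..<k}"
    define R :: "'b mat" where "R = rowsel Suc (k-1) k"
    define C :: "'b mat" where "C = colsel (\<lambda>j'. if j' < j then j' else Suc j') k (k-1)"
    have R: "R \<in> carrier_mat (k-1) k" unfolding R_def by (rule rowsel_carrier)
    have C: "C \<in> carrier_mat k (k-1)" unfolding C_def by (rule colsel_carrier)
    have "mat_delete Z 0 j = R * Z * C" unfolding R_def C_def using mat_delete_sel[OF Z] j by simp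
    also have "\<dots> = (R * V) * M * (W * C)" unfolding Z_def by (rule assoc5[OF R V M W C])
    finally have e: "mat_delete Z 0 j = (R * V) * M * (W * C)" .
    have "d dvd det ((R * V) * M * (W * C))"
      by (rule dvd_det_VMW[OF M _ _ dv]) (use R V W C in auto)
    then have "d dvd cofactor Z 0 j" unfolding cofactor_def e by simp
    then show "d dvd Z $$ (0,j) * cofactor Z 0 j" by simp
  qed
  finally show ?thesis unfolding xe Z_def .
qed

lemma det_divisor_dvd_Suc:
  fixes M :: "'b::{comm_ring_1,factorial_semiring_gcd} mat"
  assumes M: "M \<in> carrier_mat m n"
  shows "det_divisor M k dvd det_divisor M (Suc k)"
  unfolding det_divisor_def
proof (rule Gcd_greatest)
  fix x assume x: "x \<in> minors M (Suc k)"
  show "Gcd (minors M k) dvd x"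
    by (rule minors_dvd_step[OF M _ _ x]) (auto intro: Gcd_dvd)
qed

lemma minors_zero: "minors (M :: 'b::comm_ring_1 mat) 0 = {1}"
proof -
  have "submatrix M {} {} \<in> carrier_mat 0 0" by (rule carrier_matI) (simp_all add: dim_submatrix)
  then have d1: "det (submatrix M {} {}) = 1" by simp
  have z: "\<And>I r. I \<subseteq> {..<r::nat} \<Longrightarrow> card I = 0 \<Longrightarrow> I = {}"
    using finite_subset[OF _ finite_lessThan] card_0_eq by blast
  show ?thesis unfolding minors_def
  proof (rule equalityI; rule subsetI)
    fix x assume "x \<in> {det (submatrix M I J) |I J. I \<subseteq> {..<dim_row M} \<and> J \<subseteq> {..<dim_col M} \<and> card I = 0 \<and> card J = 0}"
    then obtain I J where "x = det (submatrix M I J)" "I \<subseteq> {..<dim_row M}" "J \<subseteq> {..<dim_col M}" "card I = 0" "card J = 0" by blast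
    then show "x \<in> {1}" using z d1 by blast
  next
    fix x :: 'b assume "x \<in> {1}"
    then show "x \<in> {det (submatrix M I J) |I J. I \<subseteq> {..<dim_row M} \<and> J \<subseteq> {..<dim_col M} \<and> card I = 0 \<and> card J = 0}"
      using d1 by force
  qed
qed

lemma det_divisor_zero: "det_divisor (M :: 'b::{comm_ring_1,factorial_semiring_gcd} mat) 0 = 1"
  unfolding det_divisor_def minors_zero by simp

lemma det_divisor_dvd_VMW:
  fixes M :: "'b::{comm_ring_1,factorial_semiring_gcd} mat"
  assumes M: "M \<in> carrier_mat m n" and V: "V \<in> carrier_mat k m" and W: "W \<in> carrier_mat n k"
  shows "det_divisor M k dvd det (V * M * W)"
  unfolding det_divisor_def by (rule dvd_det_VMW[OF M V W]) (rule Gcd_dvd)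

lemma nonzero_minor_VMW:
  fixes M :: "'b::comm_ring_1 mat"
  assumes M: "M \<in> carrier_mat m n" and V: "V \<in> carrier_mat k m" and W: "W \<in> carrier_mat n k"
  and nz: "det (V * M * W) \<noteq> 0"
  shows "\<exists>x \<in> minors M k. x \<noteq> 0"
proof (rule ccontr)
  assume "\<not> ?thesis"
  then have "0 dvd det (V * M * W)" by (intro dvd_det_VMW[OF M V W]) auto
  then show False using nz by simp
qed


definition lin :: "'c::comm_ring_1 \<Rightarrow> 'c \<Rightarrow> ('a \<Rightarrow> 'c) \<Rightarrow> 'a pencil \<Rightarrow> 'c mat" where
  "lin a b h X = mat (dim_row (fst X)) (dim_col (fst X)) (\<lambda>(i,j). a * h (fst X $$ (i,j)) + b * h (snd X $$ (i,j)))"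

lemma lin_carrier: assumes X: "fst X \<in> carrier_mat r c" shows "lin a b h X \<in> carrier_mat r c"
proof -
  have "dim_row (fst X) = r" "dim_col (fst X) = c" using X by auto
  then show ?thesis unfolding lin_def by (intro carrier_matI) auto
qed

lemma lin_alt:
  assumes "fst X \<in> carrier_mat r c" "snd X \<in> carrier_mat r c"
  shows "lin a b h X = a \<cdot>\<^sub>m map_mat h (fst X) + b \<cdot>\<^sub>m map_mat h (snd X)"
  by (rule eq_matI) (use assms in \<open>auto simp: lin_def\<close>)

lemma lin_alt_pair:
  assumes "X0 \<in> carrier_mat r c" "X1 \<in> carrier_mat r c"
  shows "lin a b h (X0, X1) = a \<cdot>\<^sub>m map_mat h X0 + b \<cdot>\<^sub>m map_mat h X1"
  by (rule eq_matI) (use assms in \<open>auto simp: lin_def\<close>)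

lemma lin_prod:
  assumes h: "semiring_hom h"
  and P: "P \<in> carrier_mat r' r" and X0: "X0 \<in> carrier_mat r c" and X1: "X1 \<in> carrier_mat r c"
  and Q: "Q \<in> carrier_mat c c'"
  shows "lin a b h (P * X0 * Q, P * X1 * Q) = map_mat h P * lin a b h (X0, X1) * map_mat h Q"
proof -
  let ?P = "map_mat h P" and ?Q = "map_mat h Q" and ?X0 = "map_mat h X0" and ?X1 = "map_mat h X1"
  have cP: "?P \<in> carrier_mat r' r" and cQ: "?Q \<in> carrier_mat c c'" and c0: "?X0 \<in> carrier_mat r c"
    and c1: "?X1 \<in> carrier_mat r c" using P Q X0 X1 by auto
  have m0: "map_mat h (P * X0 * Q) = ?P * ?X0 * ?Q"
    using semiring_hom.mat_hom_mult[OF h, of "P * X0" r' c Q c'] semiring_hom.mat_hom_mult[OF h P X0] P X0 Q by simp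
  have m1: "map_mat h (P * X1 * Q) = ?P * ?X1 * ?Q"
    using semiring_hom.mat_hom_mult[OF h, of "P * X1" r' c Q c'] semiring_hom.mat_hom_mult[OF h P X1] P X1 Q by simp
  have "lin a b h (P * X0 * Q, P * X1 * Q) = a \<cdot>\<^sub>m map_mat h (P * X0 * Q) + b \<cdot>\<^sub>m map_mat h (P * X1 * Q)"
    by (rule lin_alt_pair) (use P X0 X1 Q in auto)
  also have "\<dots> = a \<cdot>\<^sub>m (?P * ?X0 * ?Q) + b \<cdot>\<^sub>m (?P * ?X1 * ?Q)" unfolding m0 m1 ..
  also have "\<dots> = ?P * (a \<cdot>\<^sub>m ?X0 + b \<cdot>\<^sub>m ?X1) * ?Q"
  proof -
    have "?P * (a \<cdot>\<^sub>m ?X0 + b \<cdot>\<^sub>m ?X1) = ?P * (a \<cdot>\<^sub>m ?X0) + ?P * (b \<cdot>\<^sub>m ?X1)"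
      by (rule mult_add_distrib_mat[OF cP]) (use c0 c1 in auto)
    also have "\<dots> = a \<cdot>\<^sub>m (?P * ?X0) + b \<cdot>\<^sub>m (?P * ?X1)"
      using mult_smult_distrib[OF cP c0] mult_smult_distrib[OF cP c1] by simp
    finally have e: "?P * (a \<cdot>\<^sub>m ?X0 + b \<cdot>\<^sub>m ?X1) = a \<cdot>\<^sub>m (?P * ?X0) + b \<cdot>\<^sub>m (?P * ?X1)" .
    have "(a \<cdot>\<^sub>m (?P * ?X0) + b \<cdot>\<^sub>m (?P * ?X1)) * ?Q = (a \<cdot>\<^sub>m (?P * ?X0)) * ?Q + (b \<cdot>\<^sub>m (?P * ?X1)) * ?Q"
      by (rule add_mult_distrib_mat[OF _ _ cQ]) (use cP c0 c1 in auto)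
    also have "\<dots> = a \<cdot>\<^sub>m (?P * ?X0 * ?Q) + b \<cdot>\<^sub>m (?P * ?X1 * ?Q)"
      using mult_smult_assoc_mat[OF mult_carrier_mat[OF cP c0] cQ] mult_smult_assoc_mat[OF mult_carrier_mat[OF cP c1] cQ] by simp
    finally show ?thesis using e by simp
  qed
  also have "a \<cdot>\<^sub>m ?X0 + b \<cdot>\<^sub>m ?X1 = lin a b h (X0, X1)"
    by (rule lin_alt_pair[symmetric, OF X0 X1])
  finally show ?thesis .
qed

lemma lin_diag:
  assumes h0: "h 0 = 0"
  and X0: "fst X \<in> carrier_mat r1 c1" and X1: "snd X \<in> carrier_mat r1 c1"
  and Y0: "fst Y \<in> carrier_mat r2 c2" and Y1: "snd Y \<in> carrier_mat r2 c2"
  shows "lin a b h (diag_pencil X Y) = four_block_mat (lin a b h X) (0\<^sub>m r1 c2) (0\<^sub>m r2 c1) (lin a b h Y)"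
  by (rule eq_matI) (use assms in \<open>auto simp: lin_def diag_pencil_def\<close>)

lemma diag_carrier:
  assumes X0: "fst X \<in> carrier_mat r1 c1" and X1: "snd X \<in> carrier_mat r1 c1"
  and Y0: "fst Y \<in> carrier_mat r2 c2" and Y1: "snd Y \<in> carrier_mat r2 c2"
  shows "fst (diag_pencil X Y) \<in> carrier_mat (r1 + r2) (c1 + c2)" "snd (diag_pencil X Y) \<in> carrier_mat (r1 + r2) (c1 + c2)"
  using assms by (auto simp: diag_pencil_def)

definition goodp :: "'c::idom \<Rightarrow> 'c \<Rightarrow> ('a \<Rightarrow> 'c) \<Rightarrow> 'a pencil \<Rightarrow> nat \<Rightarrow> 'c \<Rightarrow> 'c \<Rightarrow> bool" where
  "goodp a b h B k da db \<longleftrightarrow> (\<exists>r c. fst B \<in> carrier_mat r c \<and> snd B \<in> carrier_mat r c \<and>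
    (\<exists>X Y. X \<in> carrier_mat r k \<and> Y \<in> carrier_mat k c \<and> lin a b h B = X * Y) \<and>
    (\<exists>V W. V \<in> carrier_mat k r \<and> W \<in> carrier_mat c k \<and> det (V * lin a b h B * W) = da) \<and>
    (\<exists>V W. V \<in> carrier_mat k r \<and> W \<in> carrier_mat c k \<and> det (V * lin a b h B * W) = db))"

lemma block_VW:
  assumes V1: "V1 \<in> carrier_mat k1 r1" and L1: "L1 \<in> carrier_mat r1 c1" and W1: "W1 \<in> carrier_mat c1 k1"
  and V2: "V2 \<in> carrier_mat k2 r2" and L2: "L2 \<in> carrier_mat r2 c2" and W2: "W2 \<in> carrier_mat c2 k2"
  shows "det (four_block_mat V1 (0\<^sub>m k1 r2) (0\<^sub>m k2 r1) V2 * four_block_mat L1 (0\<^sub>m r1 c2) (0\<^sub>m r2 c1) L2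
            * four_block_mat W1 (0\<^sub>m c1 k2) (0\<^sub>m c2 k1) W2) = det (V1 * L1 * W1) * det (V2 * L2 * W2 :: 'c::idom mat)"
proof -
  have e1: "four_block_mat V1 (0\<^sub>m k1 r2) (0\<^sub>m k2 r1) V2 * four_block_mat L1 (0\<^sub>m r1 c2) (0\<^sub>m r2 c1) L2
     = four_block_mat (V1 * L1) (0\<^sub>m k1 c2) (0\<^sub>m k2 c1) (V2 * L2)"
    by (subst mult_four_block_mat[OF V1 _ _ V2 L1 _ _ L2]) (use V1 V2 L1 L2 in auto)
  have e2: "four_block_mat (V1 * L1) (0\<^sub>m k1 c2) (0\<^sub>m k2 c1) (V2 * L2) * four_block_mat W1 (0\<^sub>m c1 k2) (0\<^sub>m c2 k1) W2
     = four_block_mat (V1 * L1 * W1) (0\<^sub>m k1 k2) (0\<^sub>m k2 k1) (V2 * L2 * W2)"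
    by (subst mult_four_block_mat[OF mult_carrier_mat[OF V1 L1] _ _ mult_carrier_mat[OF V2 L2] W1 _ _ W2])
      (use V1 V2 L1 L2 W1 W2 in auto)
  show ?thesis unfolding e1 e2
    by (rule det_four_block_mat_upper_right_zero) (use V1 V2 L1 L2 W1 W2 in auto)
qed

lemma goodp_diag:
  assumes h0: "h 0 = 0"
  and gX: "goodp a b h X k1 da1 db1" and gY: "goodp a b h Y k2 da2 db2"
  shows "goodp a b h (diag_pencil X Y) (k1 + k2) (da1 * da2) (db1 * db2)"
proof -
  obtain r1 c1 where X0: "fst X \<in> carrier_mat r1 c1" and X1: "snd X \<in> carrier_mat r1 c1"
    and fX: "\<exists>A B. A \<in> carrier_mat r1 k1 \<and> B \<in> carrier_mat k1 c1 \<and> lin a b h X = A * B"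
    and vXa: "\<exists>V W. V \<in> carrier_mat k1 r1 \<and> W \<in> carrier_mat c1 k1 \<and> det (V * lin a b h X * W) = da1"
    and vXb: "\<exists>V W. V \<in> carrier_mat k1 r1 \<and> W \<in> carrier_mat c1 k1 \<and> det (V * lin a b h X * W) = db1"
    using gX unfolding goodp_def by blast
  obtain r2 c2 where Y0: "fst Y \<in> carrier_mat r2 c2" and Y1: "snd Y \<in> carrier_mat r2 c2"
    and fY: "\<exists>A B. A \<in> carrier_mat r2 k2 \<and> B \<in> carrier_mat k2 c2 \<and> lin a b h Y = A * B"
    and vYa: "\<exists>V W. V \<in> carrier_mat k2 r2 \<and> W \<in> carrier_mat c2 k2 \<and> det (V * lin a b h Y * W) = da2"
    and vYb: "\<exists>V W. V \<in> carrier_mat k2 r2 \<and> W \<in> carrier_mat c2 k2 \<and> det (V * lin a b h Y * W) = db2"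
    using gY unfolding goodp_def by blast
  have LX: "lin a b h X \<in> carrier_mat r1 c1" by (rule lin_carrier[OF X0])
  have LY: "lin a b h Y \<in> carrier_mat r2 c2" by (rule lin_carrier[OF Y0])
  have ld: "lin a b h (diag_pencil X Y) = four_block_mat (lin a b h X) (0\<^sub>m r1 c2) (0\<^sub>m r2 c1) (lin a b h Y)"
    by (rule lin_diag[where X=X and Y=Y and h=h, OF h0 X0 X1 Y0 Y1])
  note dc = diag_carrier[where X=X and Y=Y, OF X0 X1 Y0 Y1]
  have fact: "\<exists>A B. A \<in> carrier_mat (r1 + r2) (k1 + k2) \<and> B \<in> carrier_mat (k1 + k2) (c1 + c2) \<and> lin a b h (diag_pencil X Y) = A * B"
  proof -
    obtain A1 B1 where A1: "A1 \<in> carrier_mat r1 k1" and B1: "B1 \<in> carrier_mat k1 c1" and e1: "lin a b h X = A1 * B1" using fX by blast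
    obtain A2 B2 where A2: "A2 \<in> carrier_mat r2 k2" and B2: "B2 \<in> carrier_mat k2 c2" and e2: "lin a b h Y = A2 * B2" using fY by blast
    have "four_block_mat A1 (0\<^sub>m r1 k2) (0\<^sub>m r2 k1) A2 * four_block_mat B1 (0\<^sub>m k1 c2) (0\<^sub>m k2 c1) B2
       = four_block_mat (A1 * B1) (0\<^sub>m r1 c2) (0\<^sub>m r2 c1) (A2 * B2)"
      by (subst mult_four_block_mat[OF A1 _ _ A2 B1 _ _ B2]) (use A1 A2 B1 B2 in auto)
    then have "lin a b h (diag_pencil X Y) = four_block_mat A1 (0\<^sub>m r1 k2) (0\<^sub>m r2 k1) A2 * four_block_mat B1 (0\<^sub>m k1 c2) (0\<^sub>m k2 c1) B2"
      using ld e1 e2 by simp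
    moreover have "four_block_mat A1 (0\<^sub>m r1 k2) (0\<^sub>m r2 k1) A2 \<in> carrier_mat (r1 + r2) (k1 + k2)" using A1 A2 by auto
    moreover have "four_block_mat B1 (0\<^sub>m k1 c2) (0\<^sub>m k2 c1) B2 \<in> carrier_mat (k1 + k2) (c1 + c2)" using B1 B2 by auto
    ultimately show ?thesis by blast
  qed
  have vw: "\<exists>V W. V \<in> carrier_mat (k1 + k2) (r1 + r2) \<and> W \<in> carrier_mat (c1 + c2) (k1 + k2) \<and> det (V * lin a b h (diag_pencil X Y) * W) = d1 * d2"
    if v1: "\<exists>V W. V \<in> carrier_mat k1 r1 \<and> W \<in> carrier_mat c1 k1 \<and> det (V * lin a b h X * W) = d1"
    and v2: "\<exists>V W. V \<in> carrier_mat k2 r2 \<and> W \<in> carrier_mat c2 k2 \<and> det (V * lin a b h Y * W) = d2" for d1 d2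
  proof -
    obtain V1 W1 where V1: "V1 \<in> carrier_mat k1 r1" and W1: "W1 \<in> carrier_mat c1 k1" and d1: "det (V1 * lin a b h X * W1) = d1" using v1 by blast
    obtain V2 W2 where V2: "V2 \<in> carrier_mat k2 r2" and W2: "W2 \<in> carrier_mat c2 k2" and d2: "det (V2 * lin a b h Y * W2) = d2" using v2 by blast
    have "det (four_block_mat V1 (0\<^sub>m k1 r2) (0\<^sub>m k2 r1) V2 * lin a b h (diag_pencil X Y) * four_block_mat W1 (0\<^sub>m c1 k2) (0\<^sub>m c2 k1) W2) = d1 * d2"
      unfolding ld block_VW[OF V1 LX W1 V2 LY W2] d1 d2 ..
    moreover have "four_block_mat V1 (0\<^sub>m k1 r2) (0\<^sub>m k2 r1) V2 \<in> carrier_mat (k1 + k2) (r1 + r2)" using V1 V2 by auto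
    moreover have "four_block_mat W1 (0\<^sub>m c1 k2) (0\<^sub>m c2 k1) W2 \<in> carrier_mat (c1 + c2) (k1 + k2)" using W1 W2 by auto
    ultimately show ?thesis by blast
  qed
  show ?thesis unfolding goodp_def
    using dc fact vw[OF vXa vYa] vw[OF vXb vYb] by blast
qed


lemma L_carrier: "fst (L_block k) \<in> carrier_mat k (k+1)" "snd (L_block k) \<in> carrier_mat k (k+1)"
  by (auto simp: L_block_def)
lemma LT_carrier: "fst (LT_block k) \<in> carrier_mat (k+1) k" "snd (LT_block k) \<in> carrier_mat (k+1) k"
  by (auto simp: LT_block_def L_block_def)

lemma lin_L:
  assumes h0: "h 0 = 0" and h1: "h 1 = 1"
  shows "lin a b h (L_block k) = mat k (k+1) (\<lambda>(i,j). if j = Suc i then a else if j = i then b else 0)"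
  by (rule eq_matI) (use h0 h1 in \<open>auto simp: lin_def L_block_def\<close>)

lemma lin_LT:
  assumes h0: "h 0 = 0" and h1: "h 1 = 1"
  shows "lin a b h (LT_block k) = mat (k+1) k (\<lambda>(i,j). if i = Suc j then a else if i = j then b else 0)"
  by (rule eq_matI) (use h0 h1 in \<open>auto simp: lin_def LT_block_def L_block_def\<close>)

lemma prod_diag_const: "(A :: 'b::comm_ring_1 mat) \<in> carrier_mat k k \<Longrightarrow> (\<And>i. i < k \<Longrightarrow> A $$ (i,i) = z) \<Longrightarrow> prod_list (diag_mat A) = z ^ k"
proof -
  assume A: "A \<in> carrier_mat k k" and d: "\<And>i. i < k \<Longrightarrow> A $$ (i,i) = z"
  have "prod_list (diag_mat A) = (\<Prod>i = 0..<k. A $$ (i,i))" using A by (simp add: prod_list_diag_prod)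
  also have "\<dots> = (\<Prod>i = 0..<k. z)" by (rule prod.cong) (use d in auto)
  finally show ?thesis by simp
qed

lemma goodp_L:
  assumes h0: "h 0 = 0" and h1: "h 1 = 1"
  shows "goodp a b h (L_block k) k (a ^ k) (b ^ k)"
proof -
  define L where "L = lin a b h (L_block k)"
  have Le: "L = mat k (k+1) (\<lambda>(i,j). if j = Suc i then a else if j = i then b else 0)"
    unfolding L_def by (rule lin_L[OF h0 h1])
  have Lc: "L \<in> carrier_mat k (k+1)" unfolding Le by simp
  have fact: "\<exists>X Y. X \<in> carrier_mat k k \<and> Y \<in> carrier_mat k (k+1) \<and> L = X * Y"
    using Lc left_mult_one_mat[OF Lc] by (intro exI[of _ "1\<^sub>m k"] exI[of _ L]) auto
  have va: "\<exists>V W. V \<in> carrier_mat k k \<and> W \<in> carrier_mat (k+1) k \<and> det (V * L * W) = a ^ k"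
  proof -
    have e: "rowsel (\<lambda>i. i) k k * L * colsel Suc (k+1) k = mat k k (\<lambda>(i,j). L $$ (i, Suc j))"
      by (rule sel_prod[OF Lc]) auto
    have c: "mat k k (\<lambda>(i,j). L $$ (i, Suc j)) \<in> carrier_mat k k" by simp
    have "det (mat k k (\<lambda>(i,j). L $$ (i, Suc j))) = prod_list (diag_mat (mat k k (\<lambda>(i,j). L $$ (i, Suc j))))"
      by (rule det_lower_triangular[OF _ c]) (auto simp: Le)
    also have "\<dots> = a ^ k" by (rule prod_diag_const[OF c]) (auto simp: Le)
    finally show ?thesis using e rowsel_carrier colsel_carrier by metis
  qed
  have vb: "\<exists>V W. V \<in> carrier_mat k k \<and> W \<in> carrier_mat (k+1) k \<and> det (V * L * W) = b ^ k"
  proof -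
    have e: "rowsel (\<lambda>i. i) k k * L * colsel (\<lambda>j. j) (k+1) k = mat k k (\<lambda>(i,j). L $$ (i, j))"
      by (rule sel_prod[OF Lc]) auto
    have c: "mat k k (\<lambda>(i,j). L $$ (i, j)) \<in> carrier_mat k k" by simp
    have "det (mat k k (\<lambda>(i,j). L $$ (i, j))) = prod_list (diag_mat (mat k k (\<lambda>(i,j). L $$ (i, j))))"
      by (rule det_upper_triangular[OF _ c]) (auto simp: Le upper_triangular_def)
    also have "\<dots> = b ^ k" by (rule prod_diag_const[OF c]) (auto simp: Le)
    finally show ?thesis using e rowsel_carrier colsel_carrier by metis
  qed
  show ?thesis unfolding goodp_def L_def[symmetric]
    using L_carrier fact va vb by blast
qed

lemma goodp_LT:
  assumes h0: "h 0 = 0" and h1: "h 1 = 1"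
  shows "goodp a b h (LT_block k) k (a ^ k) (b ^ k)"
proof -
  define L where "L = lin a b h (LT_block k)"
  have Le: "L = mat (k+1) k (\<lambda>(i,j). if i = Suc j then a else if i = j then b else 0)"
    unfolding L_def by (rule lin_LT[OF h0 h1])
  have Lc: "L \<in> carrier_mat (k+1) k" unfolding Le by simp
  have fact: "\<exists>X Y. X \<in> carrier_mat (k+1) k \<and> Y \<in> carrier_mat k k \<and> L = X * Y"
    using Lc right_mult_one_mat[OF Lc] by (intro exI[of _ L] exI[of _ "1\<^sub>m k"]) auto
  have va: "\<exists>V W. V \<in> carrier_mat k (k+1) \<and> W \<in> carrier_mat k k \<and> det (V * L * W) = a ^ k"
  proof -
    have e: "rowsel Suc k (k+1) * L * colsel (\<lambda>j. j) k k = mat k k (\<lambda>(i,j). L $$ (Suc i, j))"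
      by (rule sel_prod[OF Lc]) auto
    have c: "mat k k (\<lambda>(i,j). L $$ (Suc i, j)) \<in> carrier_mat k k" by simp
    have "det (mat k k (\<lambda>(i,j). L $$ (Suc i, j))) = prod_list (diag_mat (mat k k (\<lambda>(i,j). L $$ (Suc i, j))))"
      by (rule det_upper_triangular[OF _ c]) (auto simp: Le upper_triangular_def)
    also have "\<dots> = a ^ k" by (rule prod_diag_const[OF c]) (auto simp: Le)
    finally show ?thesis using e rowsel_carrier colsel_carrier by metis
  qed
  have vb: "\<exists>V W. V \<in> carrier_mat k (k+1) \<and> W \<in> carrier_mat k k \<and> det (V * L * W) = b ^ k"
  proof -
    have e: "rowsel (\<lambda>i. i) k (k+1) * L * colsel (\<lambda>j. j) k k = mat k k (\<lambda>(i,j). L $$ (i, j))"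
      by (rule sel_prod[OF Lc]) auto
    have c: "mat k k (\<lambda>(i,j). L $$ (i, j)) \<in> carrier_mat k k" by simp
    have "det (mat k k (\<lambda>(i,j). L $$ (i, j))) = prod_list (diag_mat (mat k k (\<lambda>(i,j). L $$ (i, j))))"
      by (rule det_lower_triangular[OF _ c]) (auto simp: Le)
    also have "\<dots> = b ^ k" by (rule prod_diag_const[OF c]) (auto simp: Le)
    finally show ?thesis using e rowsel_carrier colsel_carrier by metis
  qed
  show ?thesis unfolding goodp_def L_def[symmetric]
    using LT_carrier fact va vb by blast
qed

lemma goodp_R:
  assumes R: "is_pencil n n R"
  shows "goodp a b h R n (det (lin a b h R)) (det (lin a b h R))"
proof -
  have R0: "fst R \<in> carrier_mat n n" and R1: "snd R \<in> carrier_mat n n" using R by (auto simp: is_pencil_def)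
  have Lc: "lin a b h R \<in> carrier_mat n n" by (rule lin_carrier[OF R0])
  have fact: "\<exists>X Y. X \<in> carrier_mat n n \<and> Y \<in> carrier_mat n n \<and> lin a b h R = X * Y"
    using Lc left_mult_one_mat[OF Lc] by (intro exI[of _ "1\<^sub>m n"] exI[of _ "lin a b h R"]) auto
  have v: "\<exists>V W. V \<in> carrier_mat n n \<and> W \<in> carrier_mat n n \<and> det (V * lin a b h R * W) = det (lin a b h R)"
    using Lc left_mult_one_mat[OF Lc] right_mult_one_mat[OF Lc]
    by (intro exI[of _ "1\<^sub>m n"] exI[of _ "1\<^sub>m n"]) auto
  show ?thesis unfolding goodp_def using R0 R1 fact v by blast
qed

lemma goodp_foldr:
  assumes h0: "h 0 = 0"
  and bs: "\<forall>B\<in>set bs. goodp a b h B (sz B) (a ^ sz B) (b ^ sz B)"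
  and R: "goodp a b h R n dR dR"
  shows "goodp a b h (foldr diag_pencil bs R) (sum_list (map sz bs) + n)
           (a ^ sum_list (map sz bs) * dR) (b ^ sum_list (map sz bs) * dR)"
  using bs
proof (induction bs)
  case Nil
  then show ?case using R by simp
next
  case (Cons B bs)
  have gB: "goodp a b h B (sz B) (a ^ sz B) (b ^ sz B)" using Cons.prems by simp
  have gr: "goodp a b h (foldr diag_pencil bs R) (sum_list (map sz bs) + n)
           (a ^ sum_list (map sz bs) * dR) (b ^ sum_list (map sz bs) * dR)" using Cons by simp
  have "goodp a b h (diag_pencil B (foldr diag_pencil bs R)) (sz B + (sum_list (map sz bs) + n))
         (a ^ sz B * (a ^ sum_list (map sz bs) * dR)) (b ^ sz B * (b ^ sum_list (map sz bs) * dR))"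
    by (rule goodp_diag[OF h0 gB gr])
  then show ?case by (simp add: power_add mult.assoc add.assoc)
qed


lemma map_poly_mult_hom:
  assumes f0: "f 0 = 0" and fadd: "\<And>x y. f (x + y) = f x + f y" and fmult: "\<And>x y. f (x * y) = f x * f y"
  shows "map_poly f (p * q) = map_poly f p * map_poly f q"
proof (induction p)
  case 0
  then show ?case by simp
next
  case (pCons a p)
  have sm: "map_poly f (smult a q) = smult (f a) (map_poly f q)"
    by (rule poly_eqI) (simp add: coeff_map_poly f0 fmult)
  have ad: "\<And>x y. map_poly f (x + y) = map_poly f x + map_poly f y"
    by (rule poly_eqI) (simp add: coeff_map_poly f0 fadd)
  have pc: "\<And>r. map_poly f (pCons 0 r) = pCons 0 (map_poly f r)"
    by (simp add: map_poly_pCons[where f=f, OF f0] f0)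
  have "map_poly f (pCons a p * q) = map_poly f (smult a q + pCons 0 (p * q))" by simp
  also have "\<dots> = smult (f a) (map_poly f q) + pCons 0 (map_poly f p * map_poly f q)"
    unfolding ad sm pc pCons.IH ..
  also have "\<dots> = pCons (f a) (map_poly f p) * map_poly f q" by simp
  also have "pCons (f a) (map_poly f p) = map_poly f (pCons a p)" by (rule map_poly_pCons[where f=f, OF f0, symmetric])
  finally show ?case .
qed

lemma map_poly_add_hom:
  assumes f0: "f 0 = 0" and fadd: "\<And>x y. f (x + y) = f x + f y"
  shows "map_poly f (p + q) = map_poly f p + map_poly f q"
  by (rule poly_eqI) (simp add: coeff_map_poly f0 fadd)

definition EE :: "'a::comm_ring_1 \<Rightarrow> 'a poly poly" where "EE a = [:[:a:]:]"
definition st :: "'a::comm_ring_1 poly poly" where "st = [:0, [:0,1:]:]"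
definition cst :: "'a::comm_ring_1 poly \<Rightarrow> 'a poly poly" where "cst c = poly (map_poly EE c) st"
definition Hm :: "'a::comm_ring_1 poly poly \<Rightarrow> 'a poly poly" where "Hm f = poly (map_poly cst f) [:0,1:]"

lemma EE_0: "EE 0 = 0" and EE_add: "EE (x + y) = EE x + EE y" and EE_mult: "EE (x * y) = EE x * EE y"
  by (simp_all add: EE_def)
lemma EE_1: "EE 1 = 1"
  unfolding EE_def by (simp only: one_pCons[symmetric])

lemma cst_0: "cst 0 = 0" by (simp add: cst_def)
lemma cst_1: "cst 1 = 1" by (simp add: cst_def EE_1)
lemma cst_add: "cst (x + y) = cst x + cst y"
  by (simp add: cst_def map_poly_add_hom[OF EE_0 EE_add])
lemma cst_mult: "cst (x * y) = cst x * cst y"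
  by (simp add: cst_def map_poly_mult_hom[OF EE_0 EE_add EE_mult])

lemma Hm_1: "Hm 1 = 1" by (simp add: Hm_def cst_1)
lemma Hm_add: "Hm (x + y) = Hm x + Hm y"
  by (simp add: Hm_def map_poly_add_hom[OF cst_0 cst_add])
lemma Hm_mult: "Hm (x * y) = Hm x * Hm y"
  by (simp add: Hm_def map_poly_mult_hom[OF cst_0 cst_add cst_mult])

lemma Hm_0: "Hm 0 = 0" using Hm_add[of 0 0] by simp

lemma Hm_hom: "comm_ring_hom Hm"
  by unfold_locales (simp_all add: Hm_0 Hm_1 Hm_add Hm_mult)

lemma cst_pCons: "cst (pCons a c) = EE a + st * cst c"
  by (simp add: cst_def map_poly_pCons[where f=EE, OF EE_0])

lemma Hm_pCons: "Hm (pCons c f) = cst c + [:0,1:] * Hm f"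
  by (simp add: Hm_def map_poly_pCons[where f=cst, OF cst_0])

lemma coeff_cst: "coeff (cst c) j = monom (coeff c j) j"
proof (induction c arbitrary: j)
  case 0
  then show ?case by (simp add: cst_0)
next
  case (pCons a c)
  have stm: "st * X = pCons 0 (smult [:0,1:] X)" for X :: "'a poly poly"
    by (simp add: st_def)
  show ?case
  proof (cases j)
    case 0
    then show ?thesis by (simp add: cst_pCons stm EE_def monom_0)
  next
    case (Suc j')
    have "coeff (cst (pCons a c)) j = [:0,1:] * monom (coeff c j') j'"
      using pCons.IH[of j'] by (simp add: cst_pCons stm EE_def Suc)
    also have "\<dots> = monom (coeff c j') (Suc j')"
      by (simp add: monom_Suc)
    finally show ?thesis by (simp add: Suc)
  qed
qed

lemma coeff_coeff_Hm: "coeff (coeff (Hm f) m) j = (if j \<le> m then coeff (coeff f (m - j)) j else 0)"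
proof (induction f arbitrary: m)
  case 0
  then show ?case by (simp add: Hm_0)
next
  case (pCons c f)
  have e: "coeff (Hm (pCons c f)) m = monom (coeff c m) m + (case m of 0 \<Rightarrow> 0 | Suc m' \<Rightarrow> coeff (Hm f) m')"
    by (simp add: Hm_pCons coeff_cst coeff_pCons split: nat.split)
  show ?case
  proof (cases m)
    case 0
    then show ?thesis using e by (auto simp: coeff_monom)
  next
    case (Suc m')
    have "coeff (coeff (Hm (pCons c f)) m) j = (if m = j then coeff c m else 0) + coeff (coeff (Hm f) m') j"
      using e Suc by (simp add: coeff_monom)
    also have "\<dots> = (if j \<le> m then coeff (coeff (pCons c f) (m - j)) j else 0)"
      by (cases "j = m") (use pCons.IH[of m'] Suc in \<open>auto simp: coeff_pCons Suc_diff_le split: nat.split\<close>)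
    finally show ?thesis .
  qed
qed


definition tS :: "'a::zero poly poly \<Rightarrow> nat set" where
  "tS f = {i + degree (coeff f i) | i. coeff f i \<noteq> 0}"

lemma tdeg_tS: "tdeg f = Max (insert 0 (tS f))" unfolding tdeg_def tS_def ..

lemma finite_tS: "finite (tS f)"
proof -
  have "tS f \<subseteq> (\<lambda>i. i + degree (coeff f i)) ` {..degree f}"
    unfolding tS_def using le_degree by fastforce
  then show ?thesis by (rule finite_subset) simp
qed

lemma tdeg_ge: "coeff f i \<noteq> 0 \<Longrightarrow> i + degree (coeff f i) \<le> tdeg f"
  unfolding tdeg_tS by (rule Max_ge) (use finite_tS in \<open>auto simp: tS_def\<close>)

lemma tdeg_le: "(\<And>i. coeff f i \<noteq> 0 \<Longrightarrow> i + degree (coeff f i) \<le> d) \<Longrightarrow> tdeg f \<le> d"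
  unfolding tdeg_tS by (rule Max.boundedI) (use finite_tS in \<open>auto simp: tS_def\<close>)

lemma tdeg_attained:
  assumes f: "f \<noteq> 0"
  shows "\<exists>i. coeff f i \<noteq> 0 \<and> tdeg f = i + degree (coeff f i)"
proof -
  have ne: "tS f \<noteq> {}" using f unfolding tS_def by (auto simp: poly_eq_iff)
  have "tdeg f = max 0 (Max (tS f))" unfolding tdeg_tS by (rule Max_insert[OF finite_tS ne])
  also have "\<dots> = Max (tS f)" by simp
  finally have "tdeg f \<in> tS f" using Max_in[OF finite_tS ne] by simp
  then show ?thesis unfolding tS_def by auto
qed

lemma tdeg_0: "tdeg 0 = 0" by (rule antisym[OF tdeg_le]) auto

lemma degree_Hm: "degree (Hm f) = tdeg (f :: 'a::comm_ring_1 poly poly)"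
proof (rule antisym)
  show "degree (Hm f) \<le> tdeg f"
  proof (rule degree_le)
    show "\<forall>m>tdeg f. coeff (Hm f) m = 0"
    proof (intro allI impI)
      fix m assume m: "tdeg f < m"
      show "coeff (Hm f) m = 0"
      proof (rule poly_eqI)
        fix j
        show "coeff (coeff (Hm f) m) j = coeff 0 j"
        proof (cases "j \<le> m \<and> coeff (coeff f (m - j)) j \<noteq> 0")
          case True
          then have nz: "coeff f (m - j) \<noteq> 0" by auto
          have "j \<le> degree (coeff f (m - j))" using True le_degree by blast
          then have "m \<le> tdeg f" using tdeg_ge[OF nz] True by linarith
          then show ?thesis using m by simp
        next
          case False
          then show ?thesis by (auto simp: coeff_coeff_Hm)
        qed
      qed
    qed
  qed
next
  show "tdeg f \<le> degree (Hm f)"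
  proof (cases "f = 0")
    case True
    then show ?thesis by (simp add: tdeg_0)
  next
    case False
    obtain i where i: "coeff f i \<noteq> 0" and t: "tdeg f = i + degree (coeff f i)"
      using tdeg_attained[OF False] by blast
    have "coeff (coeff (Hm f) (tdeg f)) (degree (coeff f i)) = lead_coeff (coeff f i)"
      by (simp add: coeff_coeff_Hm t)
    also have "\<dots> \<noteq> 0" using i by simp
    finally have "coeff (Hm f) (tdeg f) \<noteq> 0" by auto
    then show ?thesis by (rule le_degree)
  qed
qed

lemma Hm_eq_0: "Hm f = 0 \<Longrightarrow> f = (0 :: 'a::comm_ring_1 poly poly)"
proof -
  assume h: "Hm f = 0"
  show "f = 0"
  proof (rule poly_eqI, rule poly_eqI)
    fix i j
    have "coeff (coeff (Hm f) (i + j)) j = coeff (coeff f i) j" by (simp add: coeff_coeff_Hm)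
    then show "coeff (coeff f i) j = coeff (coeff 0 i) j" using h by simp
  qed
qed

lemma tdeg_mult:
  fixes f g :: "'a::idom poly poly"
  assumes f: "f \<noteq> 0" and g: "g \<noteq> 0"
  shows "tdeg (f * g) = tdeg f + tdeg g"
proof -
  have "Hm f \<noteq> 0" using f Hm_eq_0 by blast
  moreover have "Hm g \<noteq> 0" using g Hm_eq_0 by blast
  ultimately have "degree (Hm f * Hm g) = degree (Hm f) + degree (Hm g)" by (rule degree_mult_eq)
  then show ?thesis by (simp add: Hm_mult[symmetric] degree_Hm)
qed

lemma tdeg_1: "tdeg (1 :: 'a::comm_ring_1 poly poly) = 0"
  using degree_Hm[of "1 :: 'a poly poly"] by (simp add: Hm_1)

lemma tdeg_unit:
  fixes f :: "'a::field poly poly"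
  assumes f: "f \<noteq> 0" and t: "tdeg f = 0"
  shows "is_unit f"
proof -
  have z: "coeff f i \<noteq> 0 \<Longrightarrow> i = 0 \<and> degree (coeff f i) = 0" for i
    using tdeg_ge[of f i] t by auto
  have df: "degree f = 0"
  proof (rule ccontr)
    assume a: "degree f \<noteq> 0"
    have "coeff f (degree f) \<noteq> 0" using f by simp
    then have "degree f = 0" using z by blast
    then show False using a by simp
  qed
  have f0: "coeff f 0 \<noteq> 0" using f df by (metis leading_coeff_0_iff)
  have dc: "degree (coeff f 0) = 0" using z[OF f0] by simp
  obtain c where c: "coeff f 0 = [:c:]" using dc by (metis degree_eq_zeroE)
  have c0: "c \<noteq> 0" using f0 c by auto
  have fe: "f = [:[:c:]:]"
  proof (rule poly_eqI)
    fix i show "coeff f i = coeff [:[:c:]:] i"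
    proof (cases i)
      case 0 then show ?thesis using c by simp
    next
      case (Suc i') then show ?thesis using df by (simp add: coeff_eq_0)
    qed
  qed
  have "f * [:[:inverse c:]:] = 1" using c0 by (simp add: fe one_pCons)
  then show ?thesis by (metis dvdI)
qed

lemma tdeg_dvd:
  fixes f g :: "'a::idom poly poly"
  assumes d: "f dvd g" and g: "g \<noteq> 0"
  shows "tdeg f \<le> tdeg g"
proof -
  obtain h where h: "g = f * h" using d by (auto elim: dvdE)
  have f0: "f \<noteq> 0" and h0: "h \<noteq> 0" using g h by auto
  show ?thesis using tdeg_mult[OF f0 h0] h by simp
qed

lemma tdeg_dvd_eq:
  fixes f g :: "'a::field poly poly"
  assumes d: "f dvd g" and g: "g \<noteq> 0" and e: "tdeg f = tdeg g"
  shows "g dvd f"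
proof -
  obtain h where h: "g = f * h" using d by (auto elim: dvdE)
  have f0: "f \<noteq> 0" and h0: "h \<noteq> 0" using g h by auto
  then have "tdeg h = 0" using tdeg_mult[OF f0 h0] h e by simp
  then have "is_unit h" using tdeg_unit h0 by blast
  then show ?thesis using h by (simp add: mult_unit_dvd_iff')
qed

lemma tdeg_det_le:
  fixes M :: "'a::comm_ring_1 poly poly mat"
  assumes M: "M \<in> carrier_mat n n" and e: "\<And>i j. i < n \<Longrightarrow> j < n \<Longrightarrow> tdeg (M $$ (i,j)) \<le> 1"
  shows "tdeg (det M) \<le> n"
proof -
  have "tdeg (det M) = degree (Hm (det M))" by (simp add: degree_Hm)
  also have "Hm (det M) = det (map_mat Hm M)" by (rule comm_ring_hom.hom_det[OF Hm_hom, symmetric])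
  also have "degree (det (map_mat Hm M)) \<le> 1 * n"
    by (rule degree_det_le) (use M e in \<open>auto simp: degree_Hm\<close>)
  finally show ?thesis by simp
qed


lemma hom1: "semiring_hom (\<lambda>x::'a::comm_ring_1. [:x:])"
  by unfold_locales (simp_all add: one_pCons)

lemma hom2: "semiring_hom (EE :: 'a::comm_ring_1 \<Rightarrow> _)"
  by unfold_locales (simp_all add: EE_0 EE_1 EE_add EE_mult)

lemma eval1_hom: "comm_ring_hom (\<lambda>f::'a::comm_ring_1 poly poly. poly f 1)"
  by unfold_locales simp_all

lemma pencil_poly_lin:
  assumes "is_pencil p q A"
  shows "pencil_poly A = lin 1 [:0,1:] (\<lambda>x. [:x:]) A"
proof (rule eq_matI)
  fix i j assume i: "i < dim_row (lin 1 [:0,1:] (\<lambda>x. [:x:]) A)" and j: "j < dim_col (lin 1 [:0,1:] (\<lambda>x. [:x:]) A)"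
  have "[:fst A $$ (i,j), snd A $$ (i,j):] = 1 * [:fst A $$ (i,j):] + [:0,1:] * [:snd A $$ (i,j):]"
    by simp
  then show "pencil_poly A $$ (i, j) = lin 1 [:0,1:] (\<lambda>x. [:x:]) A $$ (i, j)"
    using i j by (simp add: pencil_poly_def lin_def)
qed (simp_all add: pencil_poly_def lin_def)

lemma hom_pencil_lin:
  assumes "is_pencil p q A"
  shows "hom_pencil A = lin [:0,1:] [:[:0,1:]:] EE A"
proof (rule eq_matI)
  fix i j assume i: "i < dim_row (lin [:0,1:] [:[:0,1:]:] EE A)" and j: "j < dim_col (lin [:0,1:] [:[:0,1:]:] EE A)"
  have "[: [:0, snd A $$ (i,j):], [:fst A $$ (i,j):] :] = [:0,1:] * EE (fst A $$ (i,j)) + [:[:0,1:]:] * EE (snd A $$ (i,j))"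
    by (simp add: EE_def)
  then show "hom_pencil A $$ (i, j) = lin [:0,1:] [:[:0,1:]:] EE A $$ (i, j)"
    using i j by (simp add: hom_pencil_def lin_def)
qed (simp_all add: hom_pencil_def lin_def)

lemma eval_hom_pencil:
  "pencil_poly R = map_mat (\<lambda>f. poly f 1) (hom_pencil R)"
  by (rule eq_matI) (simp_all add: pencil_poly_def hom_pencil_def)

lemma det_hom_nonzero:
  assumes "det (pencil_poly R) \<noteq> 0"
  shows "det (hom_pencil (R :: 'a::comm_ring_1 pencil)) \<noteq> 0"
proof
  assume "det (hom_pencil R) = 0"
  then have "det (map_mat (\<lambda>f. poly f 1) (hom_pencil R)) = 0"
    by (simp add: comm_ring_hom.hom_det[OF eval1_hom])
  then show False using assms eval_hom_pencil by metis
qed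

lemma tdeg_hom_entries:
  assumes R: "is_pencil n n R" and i: "i < n" and j: "j < n"
  shows "tdeg (hom_pencil R $$ (i,j)) \<le> 1"
proof (rule tdeg_le)
  fix k assume k: "coeff (hom_pencil R $$ (i,j)) k \<noteq> 0"
  have dr: "dim_row (fst R) = n" "dim_col (fst R) = n" using R by (auto simp: is_pencil_def)
  have e: "hom_pencil R $$ (i,j) = [: [:0, snd R $$ (i,j):], [:fst R $$ (i,j):] :]"
    using i j dr by (simp add: hom_pencil_def)
  show "k + degree (coeff (hom_pencil R $$ (i,j)) k) \<le> 1"
  proof (cases k)
    case 0
    then show ?thesis using e by (simp add: degree_pCons_le)
  next
    case (Suc k')
    then show ?thesis using e k by (cases k') auto
  qed
qed

lemma inverse_exists:
  assumes P: "P \<in> carrier_mat n n" and inv: "invertible_mat P"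
  shows "\<exists>Pi. Pi \<in> carrier_mat n n \<and> P * Pi = 1\<^sub>m n \<and> Pi * P = 1\<^sub>m n"
proof -
  obtain B where B1: "inverts_mat P B" and B2: "inverts_mat B P" using inv unfolding invertible_mat_def by blast
  have e1: "P * B = 1\<^sub>m n" using B1 P unfolding inverts_mat_def by simp
  have "dim_col B = n" using arg_cong[OF e1, of dim_col] by simp
  moreover have "dim_row B = n"
  proof -
    have "B * P = 1\<^sub>m (dim_row B)" using B2 unfolding inverts_mat_def by simp
    from arg_cong[OF this, of dim_col] show ?thesis using P by simp
  qed
  ultimately have Bc: "B \<in> carrier_mat n n" by auto
  have "B * P = 1\<^sub>m n" using B2 Bc unfolding inverts_mat_def by simp
  then show ?thesis using Bc e1 by blast
qed

lemma minors_empty: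
  assumes Y: "Y \<in> carrier_mat r c" and k: "k > r"
  shows "minors Y k = {}"
proof -
  have "\<not> (I \<subseteq> {..<r} \<and> card I = k)" for I :: "nat set"
  proof
    assume "I \<subseteq> {..<r} \<and> card I = k"
    then have "card I \<le> r" using card_mono[of "{..<r}" I] by auto
    then show False using k \<open>I \<subseteq> {..<r} \<and> card I = k\<close> by simp
  qed
  then show ?thesis unfolding minors_def using Y by auto
qed

lemma rank_bound:
  fixes M :: "'b::comm_ring_1 mat"
  assumes X: "X \<in> carrier_mat m r" and Y: "Y \<in> carrier_mat r n" and M: "M = X * Y" and k: "k > r"
  and x: "x \<in> minors M k"
  shows "x = 0"
proof -
  have Mc: "M \<in> carrier_mat m n" using X Y M by simp
  obtain V W where V: "V \<in> carrier_mat k m" and W: "W \<in> carrier_mat n k" and xe: "x = det (V * M * W)"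
    using minor_eq_sel[OF Mc x] by blast
  have "V * M * W = (V * X) * Y * W" using V X Y W M by (simp add: assoc_mult_mat)
  moreover have "0 dvd det ((V * X) * Y * W)"
    by (rule dvd_det_VMW[OF Y _ W]) (use V X minors_empty[OF Y k] in auto)
  ultimately show ?thesis using xe by simp
qed

lemma coprime_t_s: "coprime ([:0,1:] :: 'a::field poly poly) [:[:0,1:]:]"
proof (rule coprimeI)
  fix c :: "'a poly poly" assume ct: "c dvd [:0,1:]" and cs: "c dvd [:[:0,1:]:]"
  obtain g' where g': "[:[:0,1:]:] = c * g'" using cs by (auto elim: dvdE)
  have "c \<noteq> 0" "g' \<noteq> 0" using g' by auto
  then have "degree ([:[:0,1:]:] :: 'a poly poly) = degree c + degree g'" using g' degree_mult_eq by metis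
  then have dc: "degree c = 0" by simp
  obtain c0 where c0: "c = [:c0:]" using dc by (metis degree_eq_zeroE)
  obtain g where g: "[:0,1:] = c * g" using ct by (auto elim: dvdE)
  have "coeff ([:0,1:] :: 'a poly poly) 1 = c0 * coeff g 1" using g c0 by (simp add: coeff_pCons)
  then have e: "c0 * coeff g 1 = 1" by simp
  have "[:c0:] * [:coeff g 1:] = 1" using e by (simp add: one_pCons mult.commute)
  then show "is_unit c" unfolding c0 by (metis dvdI)
qed

lemma gcd_t_s_pow: "gcd (([:0,1:] :: 'a::field_gcd poly poly) ^ N) ([:[:0,1:]:] ^ N) = 1"
proof -
  have "coprime (([:0,1:] :: 'a poly poly) ^ N) ([:[:0,1:]:] ^ N)"
    using coprime_t_s by (auto simp: coprime_power_left_iff coprime_power_right_iff)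
  then show ?thesis by (simp add: coprime_iff_gcd_eq_1)
qed


lemma struct_lin:
  fixes A :: "'a::field pencil" and h :: "'a \<Rightarrow> 'c::idom"
  assumes P: "P \<in> carrier_mat p p" and Pv: "Pv \<in> carrier_mat p p" and PiP: "Pv * P = 1\<^sub>m p"
  and Q: "Q \<in> carrier_mat q q" and Qv: "Qv \<in> carrier_mat q q" and QQi: "Q * Qv = 1\<^sub>m q"
  and pA: "is_pencil p q A" and R: "is_pencil n n R"
  and K: "(P * fst A * Q, P * snd A * Q) = foldr diag_pencil (map L_block c @ map LT_block u) R"
  and h: "semiring_hom h" and h0: "h 0 = 0" and h1: "h 1 = 1"
  shows "(\<exists>X Y. X \<in> carrier_mat p (sum_list c + sum_list u + n) \<and> Y \<in> carrier_mat (sum_list c + sum_list u + n) q \<and> lin a b h A = X * Y)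
    \<and> (\<exists>V W. V \<in> carrier_mat (sum_list c + sum_list u + n) p \<and> W \<in> carrier_mat q (sum_list c + sum_list u + n)
         \<and> det (V * lin a b h A * W) = a ^ (sum_list c + sum_list u) * det (lin a b h R))
    \<and> (\<exists>V W. V \<in> carrier_mat (sum_list c + sum_list u + n) p \<and> W \<in> carrier_mat q (sum_list c + sum_list u + n)
         \<and> det (V * lin a b h A * W) = b ^ (sum_list c + sum_list u) * det (lin a b h R))"
proof -
  define N where "N = sum_list c + sum_list u"
  define bs :: "'a pencil list" where "bs = map L_block c @ map LT_block u"
  define sz :: "'a pencil \<Rightarrow> nat" where "sz = (\<lambda>B. min (dim_row (fst B)) (dim_col (fst B)))"
  have szL: "sz (L_block k) = k" for k unfolding sz_def by (simp add: L_block_def)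
  have szLT: "sz (LT_block k) = k" for k unfolding sz_def by (simp add: LT_block_def L_block_def)
  have sN: "sum_list (map sz bs) = N" unfolding bs_def N_def by (simp add: o_def szL szLT)
  have gb: "\<forall>B\<in>set bs. goodp a b h B (sz B) (a ^ sz B) (b ^ sz B)"
    unfolding bs_def using goodp_L[OF h0 h1] goodp_LT[OF h0 h1] szL szLT by auto
  have gR: "goodp a b h R n (det (lin a b h R)) (det (lin a b h R))" by (rule goodp_R[OF R])
  have gK: "goodp a b h (foldr diag_pencil bs R) (N + n) (a ^ N * det (lin a b h R)) (b ^ N * det (lin a b h R))"
    using goodp_foldr[OF h0 gb gR] unfolding sN .
  have A0: "fst A \<in> carrier_mat p q" and A1: "snd A \<in> carrier_mat p q" using pA by (auto simp: is_pencil_def)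
  have K0: "fst (foldr diag_pencil bs R) \<in> carrier_mat p q"
    using K[folded bs_def] P Q A0 by (metis fst_conv mult_carrier_mat)
  obtain r c' where Kr0: "fst (foldr diag_pencil bs R) \<in> carrier_mat r c'"
    and fK: "\<exists>X Y. X \<in> carrier_mat r (N + n) \<and> Y \<in> carrier_mat (N + n) c' \<and> lin a b h (foldr diag_pencil bs R) = X * Y"
    and vKa: "\<exists>V W. V \<in> carrier_mat (N + n) r \<and> W \<in> carrier_mat c' (N + n) \<and> det (V * lin a b h (foldr diag_pencil bs R) * W) = a ^ N * det (lin a b h R)"
    and vKb: "\<exists>V W. V \<in> carrier_mat (N + n) r \<and> W \<in> carrier_mat c' (N + n) \<and> det (V * lin a b h (foldr diag_pencil bs R) * W) = b ^ N * det (lin a b h R)"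
    using gK unfolding goodp_def by blast
  have rp: "r = p" and cq: "c' = q" using Kr0 K0 by auto
  let ?P = "map_mat h P" and ?Q = "map_mat h Q" and ?Pv = "map_mat h Pv" and ?Qv = "map_mat h Qv"
  let ?LA = "lin a b h A"
  have LA: "?LA \<in> carrier_mat p q" by (rule lin_carrier[OF A0])
  have cP: "?P \<in> carrier_mat p p" "?Pv \<in> carrier_mat p p" "?Q \<in> carrier_mat q q" "?Qv \<in> carrier_mat q q"
    using P Pv Q Qv by auto
  have LK: "lin a b h (foldr diag_pencil bs R) = ?P * ?LA * ?Q"
  proof -
    have "lin a b h (foldr diag_pencil bs R) = lin a b h (P * fst A * Q, P * snd A * Q)" using K bs_def by simp
    also have "\<dots> = ?P * lin a b h (fst A, snd A) * ?Q" by (rule lin_prod[OF h P A0 A1 Q])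
    finally show ?thesis by simp
  qed
  have PiP': "?Pv * ?P = 1\<^sub>m p"
    using semiring_hom.mat_hom_mult[OF h Pv P] PiP semiring_hom.mat_hom_one[OF h] by metis
  have QQi': "?Q * ?Qv = 1\<^sub>m q"
    using semiring_hom.mat_hom_mult[OF h Q Qv] QQi semiring_hom.mat_hom_one[OF h] by metis
  have LAe: "?LA = ?Pv * (?P * ?LA * ?Q) * ?Qv"
  proof -
    have "?Pv * (?P * ?LA * ?Q) * ?Qv = (?Pv * ?P) * ?LA * (?Q * ?Qv)"
      by (rule assoc5[OF cP(2) cP(1) LA cP(3) cP(4)])
    also have "\<dots> = ?LA" unfolding PiP' QQi' using LA by simp
    finally show ?thesis by simp
  qed
  have f1: "\<exists>X Y. X \<in> carrier_mat p (N + n) \<and> Y \<in> carrier_mat (N + n) q \<and> ?LA = X * Y"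
  proof -
    obtain X Y where X: "X \<in> carrier_mat p (N + n)" and Y: "Y \<in> carrier_mat (N + n) q"
      and e: "lin a b h (foldr diag_pencil bs R) = X * Y" using fK rp cq by blast
    have "?LA = ?Pv * (X * Y) * ?Qv" using LAe LK e by simp
    also have "\<dots> = (?Pv * X) * (Y * ?Qv)"
    proof -
      have "?Pv * (X * Y) = ?Pv * X * Y" by (rule assoc_mult_mat[symmetric, OF cP(2) X Y])
      moreover have "?Pv * X * Y * ?Qv = (?Pv * X) * (Y * ?Qv)"
        by (rule assoc_mult_mat[OF mult_carrier_mat[OF cP(2) X] Y cP(4)])
      ultimately show ?thesis by simp
    qed
    finally show ?thesis using X Y cP by (intro exI[of _ "?Pv * X"] exI[of _ "Y * ?Qv"]) auto
  qed
  have vw: "\<exists>V W. V \<in> carrier_mat (N + n) p \<and> W \<in> carrier_mat q (N + n) \<and> det (V * ?LA * W) = d"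
    if v: "\<exists>V W. V \<in> carrier_mat (N + n) r \<and> W \<in> carrier_mat c' (N + n) \<and> det (V * lin a b h (foldr diag_pencil bs R) * W) = d" for d
  proof -
    obtain V W where V: "V \<in> carrier_mat (N + n) p" and W: "W \<in> carrier_mat q (N + n)"
      and e: "det (V * lin a b h (foldr diag_pencil bs R) * W) = d" using v rp cq by blast
    have "V * (?P * ?LA * ?Q) * W = (V * ?P) * ?LA * (?Q * W)" by (rule assoc5[OF V cP(1) LA cP(3) W])
    then have "det ((V * ?P) * ?LA * (?Q * W)) = d" using e LK by simp
    moreover have "V * ?P \<in> carrier_mat (N + n) p" "?Q * W \<in> carrier_mat q (N + n)" using V W cP by auto
    ultimately show ?thesis by blast
  qed
  show ?thesis using f1 vw[OF vKa] vw[OF vKb] unfolding N_def by blast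
qed


lemma pencil_facts:
  fixes A :: "'a::field_gcd pencil"
  assumes pA: "is_pencil p q A" and kA: "kcf_minimal_indices p q A c u"
  shows "\<exists>n. pencil_rank A = sum_list c + sum_list u + n \<and> pencil_rank A \<le> p \<and>
         det_divisor (hom_pencil A) (pencil_rank A) \<noteq> 0 \<and>
         tdeg (det_divisor (hom_pencil A) (pencil_rank A)) \<le> n"
proof -
  obtain P Q R where P: "P \<in> carrier_mat p p" and iP: "invertible_mat P"
    and Q: "Q \<in> carrier_mat q q" and iQ: "invertible_mat Q" and rR: "regular_pencil R"
    and K: "(P * fst A * Q, P * snd A * Q) = foldr diag_pencil (map L_block c @ map LT_block u) R"
    using kA unfolding kcf_minimal_indices_def by blast
  obtain n where R: "is_pencil n n R" and dR: "det (pencil_poly R) \<noteq> 0"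
    using rR unfolding regular_pencil_def by blast
  obtain Pv where Pv: "Pv \<in> carrier_mat p p" and PvP: "Pv * P = 1\<^sub>m p" using inverse_exists[OF P iP] by blast
  obtain Qv where Qv: "Qv \<in> carrier_mat q q" and QQv: "Q * Qv = 1\<^sub>m q" using inverse_exists[OF Q iQ] by blast
  define N where "N = sum_list c + sum_list u"
  have A0: "fst A \<in> carrier_mat p q" using pA by (simp add: is_pencil_def)
  note S = struct_lin[OF P Pv PvP Q Qv QQv pA R K]
  have ppA: "pencil_poly A = lin 1 [:0,1:] (\<lambda>x. [:x:]) A" by (rule pencil_poly_lin[OF pA])
  have ppR: "pencil_poly R = lin 1 [:0,1:] (\<lambda>x. [:x:]) R" by (rule pencil_poly_lin[OF R])
  have ppAc: "pencil_poly A \<in> carrier_mat p q" unfolding ppA by (rule lin_carrier[OF A0])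
  note S1 = S[of "\<lambda>x. [:x:]" 1 "[:0,1:]", OF hom1, simplified, folded ppA ppR N_def]
  define Sr where "Sr = {k. \<exists>m\<in>minors (pencil_poly A) k. m \<noteq> 0}"
  have inS: "N + n \<in> Sr"
  proof -
    obtain V W where V: "V \<in> carrier_mat (N + n) p" and W: "W \<in> carrier_mat q (N + n)"
      and d: "det (V * pencil_poly A * W) = det (pencil_poly R)" using S1 by blast
    show ?thesis unfolding Sr_def using nonzero_minor_VMW[OF ppAc V W] d dR by auto
  qed
  have leS: "k \<le> N + n" if k: "k \<in> Sr" for k
  proof (rule ccontr)
    assume "\<not> k \<le> N + n"
    then have kk: "k > N + n" by simp
    obtain X Y where X: "X \<in> carrier_mat p (N + n)" and Y: "Y \<in> carrier_mat (N + n) q"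
      and e: "pencil_poly A = X * Y" using S1 by blast
    from k obtain m where m: "m \<in> minors (pencil_poly A) k" "m \<noteq> 0" unfolding Sr_def by blast
    have "m = 0" by (rule rank_bound[OF X Y e kk m(1)])
    then show False using m(2) by simp
  qed
  have finS: "finite Sr" using leS by (metis finite_atMost finite_subset subsetI atMost_iff)
  have rk: "pencil_rank A = N + n"
    unfolding pencil_rank_def Sr_def[symmetric] by (rule Max_eqI[OF finS leS inS])
  have rkp: "pencil_rank A \<le> p"
  proof (rule ccontr)
    assume "\<not> pencil_rank A \<le> p"
    then have "minors (pencil_poly A) (N + n) = {}" using minors_empty[OF ppAc] rk by simp
    then show False using inS unfolding Sr_def by simp
  qed
  let ?t = "[:0,1:] :: 'a poly poly" and ?s = "[:[:0,1:]:] :: 'a poly poly"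
  have hA: "hom_pencil A = lin ?t ?s EE A" by (rule hom_pencil_lin[OF pA])
  have hR: "hom_pencil R = lin ?t ?s EE R" by (rule hom_pencil_lin[OF R])
  have hAc: "hom_pencil A \<in> carrier_mat p q" unfolding hA by (rule lin_carrier[OF A0])
  note S2 = S[of EE ?t ?s, OF hom2 EE_0 EE_1, folded hA hR N_def]
  define dH where "dH = det (hom_pencil R)"
  have dH0: "dH \<noteq> 0" unfolding dH_def by (rule det_hom_nonzero[OF dR])
  define D where "D = det_divisor (hom_pencil A) (N + n)"
  obtain V1 W1 where V1: "V1 \<in> carrier_mat (N + n) p" and W1: "W1 \<in> carrier_mat q (N + n)"
      and d1: "det (V1 * hom_pencil A * W1) = ?t ^ N * dH" using S2 unfolding dH_def by blast
  obtain V2 W2 where V2: "V2 \<in> carrier_mat (N + n) p" and W2: "W2 \<in> carrier_mat q (N + n)"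
      and d2: "det (V2 * hom_pencil A * W2) = ?s ^ N * dH" using S2 unfolding dH_def by blast
  have D1: "D dvd ?t ^ N * dH" unfolding D_def d1[symmetric] by (rule det_divisor_dvd_VMW[OF hAc V1 W1])
  have D2: "D dvd ?s ^ N * dH" unfolding D_def d2[symmetric] by (rule det_divisor_dvd_VMW[OF hAc V2 W2])
  have tN: "?t ^ N * dH \<noteq> 0" using dH0 by simp
  have D0: "D \<noteq> 0"
  proof -
    obtain x where x: "x \<in> minors (hom_pencil A) (N + n)" "x \<noteq> 0"
      using nonzero_minor_VMW[OF hAc V1 W1] d1 tN by auto
    then show ?thesis unfolding D_def det_divisor_def by (auto simp: Gcd_0_iff)
  qed
  have "D dvd gcd (dH * ?t ^ N) (dH * ?s ^ N)" using D1 D2 by (simp add: mult.commute)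
  also have "gcd (dH * ?t ^ N) (dH * ?s ^ N) = normalize (dH * gcd (?t ^ N) (?s ^ N))" by (rule gcd_mult_left)
  also have "\<dots> = normalize dH" unfolding gcd_t_s_pow by simp
  finally have DdH: "D dvd dH" by simp
  have "tdeg D \<le> tdeg dH" by (rule tdeg_dvd[OF DdH dH0])
  also have "tdeg dH \<le> n" unfolding dH_def
  proof (rule tdeg_det_le)
    show "hom_pencil R \<in> carrier_mat n n" unfolding hR by (rule lin_carrier) (use R in \<open>simp add: is_pencil_def\<close>)
    show "\<And>i j. i < n \<Longrightarrow> j < n \<Longrightarrow> tdeg (hom_pencil R $$ (i, j)) \<le> 1" by (rule tdeg_hom_entries[OF R])
  qed
  finally have "tdeg D \<le> n" .
  then show ?thesis using rk rkp D0 unfolding D_def N_def by auto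
qed

lemma det_divisor_dvd_le:
  fixes M :: "'b::{comm_ring_1,factorial_semiring_gcd} mat"
  assumes M: "M \<in> carrier_mat m n" and kl: "k \<le> l"
  shows "det_divisor M k dvd det_divisor M l"
  using kl
proof (induction l)
  case 0 then show ?case by simp
next
  case (Suc l)
  show ?case
  proof (cases "k = Suc l")
    case True then show ?thesis by simp
  next
    case False
    then have "k \<le> l" using Suc.prems by simp
    then have "det_divisor M k dvd det_divisor M l" by (rule Suc.IH)
    also have "\<dots> dvd det_divisor M (Suc l)" by (rule det_divisor_dvd_Suc[OF M])
    finally show ?thesis .
  qed
qed

lemma inv_factor_chain:
  fixes A :: "'a::field_gcd pencil"
  assumes pA: "is_pencil p q A"
  and D0: "det_divisor (hom_pencil A) (pencil_rank A) \<noteq> 0"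
  shows "(\<forall>k. 1 \<le> k \<and> k \<le> pencil_rank A \<longrightarrow> hom_inv_factor A k \<noteq> 0) \<and>
         (\<Sum>i = 1..pencil_rank A. tdeg (hom_inv_factor A i)) = tdeg (det_divisor (hom_pencil A) (pencil_rank A))"
proof -
  define \<rho> where "\<rho> = pencil_rank A"
  define D where "D = det_divisor (hom_pencil A)"
  have A0: "fst A \<in> carrier_mat p q" using pA by (simp add: is_pencil_def)
  have hAc: "hom_pencil A \<in> carrier_mat p q" unfolding hom_pencil_lin[OF pA] by (rule lin_carrier[OF A0])
  have Dnz: "D k \<noteq> 0" if k: "k \<le> \<rho>" for k
  proof
    assume "D k = 0"
    moreover have "D k dvd D \<rho>" unfolding D_def by (rule det_divisor_dvd_le[OF hAc k])
    ultimately show False using D0 unfolding D_def \<rho>_def by simp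
  qed
  have phi: "hom_inv_factor A k = D k div D (k - 1)" if k: "1 \<le> k" "k \<le> \<rho>" for k
    using k unfolding hom_inv_factor_def D_def \<rho>_def by simp
  have Dk: "D k = hom_inv_factor A k * D (k - 1)" if k: "1 \<le> k" "k \<le> \<rho>" for k
  proof -
    have "D (k - 1) dvd D k" using det_divisor_dvd_Suc[OF hAc, of "k - 1"] k unfolding D_def by simp
    then show ?thesis using phi[OF k] by simp
  qed
  have nz: "hom_inv_factor A k \<noteq> 0" if k: "1 \<le> k" "k \<le> \<rho>" for k
    using Dk[OF k] Dnz[OF k(2)] by auto
  have sum: "k \<le> \<rho> \<Longrightarrow> (\<Sum>i = 1..k. tdeg (hom_inv_factor A i)) = tdeg (D k)" for k
  proof (induction k)
    case 0
    then show ?case by (simp add: D_def det_divisor_zero tdeg_1)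
  next
    case (Suc k)
    have "tdeg (D (Suc k)) = tdeg (hom_inv_factor A (Suc k) * D k)" using Dk[of "Suc k"] Suc.prems by simp
    also have "\<dots> = tdeg (hom_inv_factor A (Suc k)) + tdeg (D k)"
      by (rule tdeg_mult) (use nz[of "Suc k"] Dnz[of k] Suc.prems in auto)
    finally show ?case using Suc by simp
  qed
  show ?thesis using nz sum[of \<rho>] unfolding \<rho>_def D_def by auto
qed


lemma conj_part_Cons: "conj_part (y # c) i = (if i \<le> y then 1 else 0) + conj_part c i"
  by (simp add: conj_part_def)

lemma elem_le_sum_list: "y \<in> set c \<Longrightarrow> y \<le> sum_list (c :: nat list)"
  by (induction c) auto

lemma conj_part_pos: "conj_part c i > 0 \<Longrightarrow> i \<le> sum_list c"
proof -
  assume "conj_part c i > 0"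
  then obtain y where y: "y \<in> set c" "i \<le> y" unfolding conj_part_def by (auto simp: filter_empty_conv)
  have "y \<le> sum_list c" using y(1) by (rule elem_le_sum_list)
  then show ?thesis using y(2) by simp
qed

lemma sum_indicator_le: "(\<Sum>i = 1..K. (if i \<le> (y::nat) then 1 else 0)) = min y K"
proof -
  have "(\<Sum>i = 1..K. (if i \<le> y then 1 else 0)) = card ({1..K} \<inter> {i. i \<le> y})"
    by (simp add: sum.If_cases)
  also have "{1..K} \<inter> {i. i \<le> y} = {1..min y K}" by auto
  finally show ?thesis by simp
qed

lemma conj_sum: "(\<Sum>i = 1..K. conj_part c i) = (\<Sum>y\<leftarrow>c. min y K)"
proof (induction c)
  case Nil
  then show ?case by (simp add: conj_part_def)
next
  case (Cons y c)
  have "(\<Sum>i = 1..K. conj_part (y # c) i) = (\<Sum>i = 1..K. (if i \<le> y then 1 else 0)) + (\<Sum>i = 1..K. conj_part c i)"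
    unfolding conj_part_Cons by (simp add: sum.distrib)
  also have "\<dots> = min y K + (\<Sum>y\<leftarrow>c. min y K)" using Cons sum_indicator_le by simp
  finally show ?case by simp
qed

lemma sum_list_min_le: "(\<Sum>y\<leftarrow>c. min y K) \<le> sum_list (c :: nat list)"
  by (induction c) auto

lemma sum_list_min_eq: "(\<forall>y\<in>set c. y \<le> K) \<Longrightarrow> (\<Sum>y\<leftarrow>c. min y K) = sum_list (c :: nat list)"
  by (induction c) auto

lemma conj_sum_le: "(\<Sum>i = 1..K. conj_part c i) \<le> sum_list c"
  using conj_sum sum_list_min_le by metis

lemma conj_sum_eq: "sum_list c \<le> K \<Longrightarrow> (\<Sum>i = 1..K. conj_part c i) = sum_list c"
proof -
  assume K: "sum_list c \<le> K"
  have "\<forall>y\<in>set c. y \<le> K" using K elem_le_sum_list order_trans by blast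
  then show ?thesis using conj_sum sum_list_min_eq by metis
qed

lemma comb:
  fixes r s :: "nat \<Rightarrow> nat" and a b \<rho> :: nat and G :: int and Dp Dq :: bool
  assumes ra: "(\<Sum>i = 1..\<rho>. r i) = a" and sb: "(\<Sum>i = 1..\<rho>. s i) = b"
  and rzH: "\<forall>i. 1 \<le> i \<longrightarrow> r i > 0 \<longrightarrow> i \<le> \<rho>" and szH: "\<forall>i. 1 \<le> i \<longrightarrow> s i > 0 \<longrightarrow> i \<le> \<rho>"
  and r0: "r 0 = s 0" and rs: "r \<noteq> s"
  defines "x \<equiv> (LEAST i. r i \<noteq> s i)"
  defines "e \<equiv> int (LEAST j. x \<le> j \<and> r j \<le> s j) - 1"
    and "e' \<equiv> int (LEAST j. x \<le> j \<and> s j \<le> r j) - 1"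
  assumes Gup: "G \<le> (\<Sum>i = 1..\<rho>. int (min (r i) (s i))) + max e e'"
  and Ga: "G \<ge> int a - 1" and Gb: "G \<ge> int b - 1"
  and GpH: "\<not> Dp \<longrightarrow> G \<ge> int a" and GqH: "\<not> Dq \<longrightarrow> G \<ge> int b"
  and rxs: "r x > s x"
  shows "e > e' \<and>
    (\<forall>i::nat. x \<le> i \<and> int i \<le> e \<longrightarrow>
       - int x - 1 \<le> int (s i) - int (r i) \<and> int (s i) - int (r i) \<le> -1 \<and>
       (int (s i) - int (r i) = - int x - 1 \<longrightarrow> Dp)) \<and>
    (\<forall>i::nat. int i > e \<longrightarrow>
       - int x \<le> int (s i) - int (r i) \<and> int (s i) - int (r i) \<le> e + 1 \<and>
       (int (s i) - int (r i) = e + 1 \<longrightarrow> Dq))"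
proof -
  have rz: "\<And>i. 1 \<le> i \<Longrightarrow> r i > 0 \<Longrightarrow> i \<le> \<rho>" using rzH by blast
  have sz: "\<And>i. 1 \<le> i \<Longrightarrow> s i > 0 \<Longrightarrow> i \<le> \<rho>" using szH by blast
  have Gp: "\<not> Dp \<Longrightarrow> G \<ge> int a" using GpH by blast
  have Gq: "\<not> Dq \<Longrightarrow> G \<ge> int b" using GqH by blast
  define j0 where "j0 = (LEAST j. x \<le> j \<and> r j \<le> s j)"
  have x1: "x \<ge> 1"
  proof (rule ccontr)
    assume "\<not> x \<ge> 1"
    then have "x = 0" by simp
    then show False using rxs r0 by simp
  qed
  have rle: "r i = 0" if "i > \<rho>" "1 \<le> i" for i using rz[of i] that by fastforce
  have sle: "s i = 0" if "i > \<rho>" "1 \<le> i" for i using sz[of i] that by fastforce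
  have ex: "x \<le> max x (Suc \<rho>) \<and> r (max x (Suc \<rho>)) \<le> s (max x (Suc \<rho>))"
    using rle[of "max x (Suc \<rho>)"] by simp
  have j0p: "x \<le> j0 \<and> r j0 \<le> s j0" unfolding j0_def by (rule LeastI[of _ "max x (Suc \<rho>)"]) (rule ex)
  have j0x: "j0 > x" using j0p rxs by (cases "j0 = x") auto
  have between: "r j > s j" if "x \<le> j" "j < j0" for j
    using not_less_Least[of j "\<lambda>j. x \<le> j \<and> r j \<le> s j"] that unfolding j0_def by auto
  have e'x: "e' = int x - 1"
  proof -
    have "(LEAST j. x \<le> j \<and> s j \<le> r j) = x" by (rule Least_equality) (use rxs in auto)
    then show ?thesis unfolding e'_def by simp
  qed
  have ej0: "e = int j0 - 1" unfolding e_def j0_def ..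
  have ee': "e > e'" using e'x ej0 j0x by simp
  have mx: "max e e' = e" using ee' by simp
  have btw_rho: "j \<le> \<rho>" if "x \<le> j" "j < j0" for j using rz[of j] between[OF that] x1 that by simp
  define M where "M = (\<Sum>i = 1..\<rho>. int (min (r i) (s i)))"
  define EA where "EA = (\<Sum>i = 1..\<rho>. int (r i) - int (min (r i) (s i)))"
  define EB where "EB = (\<Sum>i = 1..\<rho>. int (s i) - int (min (r i) (s i)))"
  have EAe: "EA = int a - M" unfolding EA_def M_def using ra by (simp add: sum_subtractf flip: of_nat_sum)
  have EBe: "EB = int b - M" unfolding EB_def M_def using sb by (simp add: sum_subtractf flip: of_nat_sum)
  have EAup: "EA \<le> int j0" using Gup Ga EAe ej0 mx unfolding M_def by simp
  have EBup: "EB \<le> int j0" using Gup Gb EBe ej0 mx unfolding M_def by simp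
  have EAp: "\<not> Dp \<Longrightarrow> EA \<le> int j0 - 1" using Gup Gp EAe ej0 mx unfolding M_def by simp
  have EBq: "\<not> Dq \<Longrightarrow> EB \<le> int j0 - 1" using Gup Gq EBe ej0 mx unfolding M_def by simp
  have EAsub: "(\<Sum>j\<in>T. int (r j) - int (min (r j) (s j))) \<le> EA" if T: "T \<subseteq> {1..\<rho>}" for T
    unfolding EA_def by (rule sum_mono2) (use T in auto)
  have EBterm: "int (s i) - int (min (r i) (s i)) \<le> EB" if i: "1 \<le> i" "i \<le> \<rho>" for i
  proof -
    have "(\<Sum>j\<in>{i}. int (s j) - int (min (r j) (s j))) \<le> EB"
      unfolding EB_def by (rule sum_mono2) (use i in auto)
    then show ?thesis by simp
  qed
  define T0 where "T0 = {x..<j0}"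
  have T0sub: "T0 \<subseteq> {1..\<rho>}" unfolding T0_def using btw_rho x1 by auto
  have T0card: "card T0 = j0 - x" unfolding T0_def by simp
  have T0term: "j \<in> T0 \<Longrightarrow> int (r j) - int (min (r j) (s j)) = int (r j) - int (s j)" for j
  proof -
    assume "j \<in> T0"
    then have "s j < r j" using between unfolding T0_def by auto
    then show ?thesis by (simp add: min_def)
  qed
  have T0ge1: "j \<in> T0 \<Longrightarrow> int (r j) - int (min (r j) (s j)) \<ge> 1" for j
    using T0term between unfolding T0_def by fastforce
  have sumT: "(\<Sum>j\<in>T. int (r j) - int (min (r j) (s j))) \<ge> int (card T)" if "T \<subseteq> T0" for T
  proof -
    have "(\<Sum>j\<in>T. (1::int)) \<le> (\<Sum>j\<in>T. int (r j) - int (min (r j) (s j)))"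
      by (rule sum_mono) (use T0ge1 that in auto)
    then show ?thesis by simp
  qed
  have finT0: "finite T0" unfolding T0_def by simp
  have partA: "\<forall>i::nat. x \<le> i \<and> int i \<le> e \<longrightarrow>
       - int x - 1 \<le> int (s i) - int (r i) \<and> int (s i) - int (r i) \<le> -1 \<and>
       (int (s i) - int (r i) = - int x - 1 \<longrightarrow> Dp)"
  proof (intro allI impI)
    fix i assume i: "x \<le> i \<and> int i \<le> e"
    then have iT: "i \<in> T0" unfolding T0_def using ej0 by auto
    have ri: "r i > s i" using between i ej0 by auto
    have "(\<Sum>j\<in>T0. int (r j) - int (min (r j) (s j))) = (int (r i) - int (min (r i) (s i))) + (\<Sum>j\<in>T0 - {i}. int (r j) - int (min (r j) (s j)))"
      by (rule sum.remove[OF finT0 iT])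
    also have "\<dots> \<ge> (int (r i) - int (s i)) + int (card (T0 - {i}))"
      using sumT[of "T0 - {i}"] T0term[OF iT] by auto
    finally have "(\<Sum>j\<in>T0. int (r j) - int (min (r j) (s j))) \<ge> (int (r i) - int (s i)) + int (j0 - x) - 1"
      using T0card iT finT0 j0x by (simp add: of_nat_diff)
    then have key: "EA \<ge> (int (r i) - int (s i)) + int j0 - int x - 1"
      using EAsub[OF T0sub] j0x by (simp add: of_nat_diff)
    show "- int x - 1 \<le> int (s i) - int (r i) \<and> int (s i) - int (r i) \<le> -1 \<and>
       (int (s i) - int (r i) = - int x - 1 \<longrightarrow> Dp)"
    proof (intro conjI impI)
      show "- int x - 1 \<le> int (s i) - int (r i)" using key EAup by simp
      show "int (s i) - int (r i) \<le> -1" using ri by simp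
      assume eq: "int (s i) - int (r i) = - int x - 1"
      show Dp
      proof (rule ccontr)
        assume "\<not> Dp"
        then show False using EAp key eq by simp
      qed
    qed
  qed
  have partB: "\<forall>i::nat. int i > e \<longrightarrow>
       - int x \<le> int (s i) - int (r i) \<and> int (s i) - int (r i) \<le> e + 1 \<and>
       (int (s i) - int (r i) = e + 1 \<longrightarrow> Dq)"
  proof (intro allI impI)
    fix i assume i: "int i > e"
    then have ij: "i \<ge> j0" using ej0 by simp
    then have i1: "1 \<le> i" using j0x x1 by simp
    have low: "- int x \<le> int (s i) - int (r i)"
    proof (cases "r i > s i")
      case False then show ?thesis by simp
    next
      case True
      have irho: "i \<le> \<rho>" using rz[OF i1] True by simp
      have iT: "i \<notin> T0" unfolding T0_def using ij by simp
      have sub: "insert i T0 \<subseteq> {1..\<rho>}" using T0sub i1 irho by auto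
      have "(\<Sum>j\<in>insert i T0. int (r j) - int (min (r j) (s j))) = (int (r i) - int (min (r i) (s i))) + (\<Sum>j\<in>T0. int (r j) - int (min (r j) (s j)))"
        by (rule sum.insert[OF finT0 iT])
      also have "\<dots> \<ge> (int (r i) - int (s i)) + int (card T0)"
        using sumT[of T0] True by (auto simp: min_def)
      finally have "EA \<ge> (int (r i) - int (s i)) + int (j0 - x)"
        using EAsub[OF sub] T0card by simp
      then show ?thesis using EAup j0x by (simp add: of_nat_diff)
    qed
    have up: "int (s i) - int (r i) \<le> EB"
    proof (cases "s i > r i")
      case False
      have "0 \<le> EB" unfolding EB_def by (rule sum_nonneg) auto
      then show ?thesis using False by simp
    next
      case True
      have irho: "i \<le> \<rho>" using sz[OF i1] True by simp
      show ?thesis using EBterm[OF i1 irho] True by (simp add: min_def)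
    qed
    show "- int x \<le> int (s i) - int (r i) \<and> int (s i) - int (r i) \<le> e + 1 \<and>
       (int (s i) - int (r i) = e + 1 \<longrightarrow> Dq)"
    proof (intro conjI impI)
      show "- int x \<le> int (s i) - int (r i)" by (rule low)
      show "int (s i) - int (r i) \<le> e + 1" using up EBup ej0 by simp
      assume eq: "int (s i) - int (r i) = e + 1"
      show Dq
      proof (rule ccontr)
        assume "\<not> Dq"
        then show False using EBq up eq ej0 by simp
      qed
    qed
  qed
  show ?thesis using ee' partA partB by blast
qed


lemma S_bound:
  fixes f g :: "nat \<Rightarrow> 'a::field_gcd poly poly"
  assumes nz: "\<forall>k. 1 \<le> k \<and> k \<le> \<rho> \<longrightarrow> f k \<noteq> 0" and r1: "\<rho> \<ge> 1"
  shows "(\<Sum>i = 1..\<rho> - 1. tdeg (gcd (f (i+1)) (g (i+1)))) \<le> (\<Sum>i = 1..\<rho>. tdeg (f i))"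
    and "\<not> (\<forall>j. 1 \<le> j \<and> j \<le> \<rho> \<longrightarrow> f j dvd g j) \<Longrightarrow>
         (\<Sum>i = 1..\<rho> - 1. tdeg (gcd (f (i+1)) (g (i+1)))) + 1 \<le> (\<Sum>i = 1..\<rho>. tdeg (f i))"
proof -
  have split: "(\<Sum>i = 1..\<rho>. tdeg (f i)) = tdeg (f 1) + (\<Sum>i = 1..\<rho> - 1. tdeg (f (i+1)))"
  proof -
    have "(\<Sum>i = 1..\<rho>. tdeg (f i)) = tdeg (f 1) + (\<Sum>i = Suc 1..\<rho>. tdeg (f i))"
      by (rule sum.atLeast_Suc_atMost) (use r1 in simp)
    also have "(\<Sum>i = Suc 1..\<rho>. tdeg (f i)) = (\<Sum>i = Suc 1..Suc (\<rho> - 1). tdeg (f i))" using r1 by simp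
    also have "\<dots> = (\<Sum>i = 1..\<rho> - 1. tdeg (f (Suc i)))" by (rule sum.shift_bounds_cl_Suc_ivl)
    finally show ?thesis by simp
  qed
  have le: "tdeg (gcd (f (i+1)) (g (i+1))) \<le> tdeg (f (i+1))" if i: "i \<in> {1..\<rho> - 1}" for i
    by (rule tdeg_dvd) (use nz i in auto)
  have sle: "(\<Sum>i = 1..\<rho> - 1. tdeg (gcd (f (i+1)) (g (i+1)))) \<le> (\<Sum>i = 1..\<rho> - 1. tdeg (f (i+1)))"
    by (rule sum_mono) (rule le)
  then show "(\<Sum>i = 1..\<rho> - 1. tdeg (gcd (f (i+1)) (g (i+1)))) \<le> (\<Sum>i = 1..\<rho>. tdeg (f i))"
    using split by simp
  assume nd: "\<not> (\<forall>j. 1 \<le> j \<and> j \<le> \<rho> \<longrightarrow> f j dvd g j)"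
  then obtain j where j: "1 \<le> j" "j \<le> \<rho>" and nj: "\<not> f j dvd g j" by blast
  show "(\<Sum>i = 1..\<rho> - 1. tdeg (gcd (f (i+1)) (g (i+1)))) + 1 \<le> (\<Sum>i = 1..\<rho>. tdeg (f i))"
  proof (cases "j = 1")
    case True
    have "\<not> is_unit (f 1)" using nj True by auto
    moreover have "f 1 \<noteq> 0" using nz r1 by auto
    ultimately have "tdeg (f 1) \<noteq> 0" using tdeg_unit by blast
    then show ?thesis using split sle by simp
  next
    case False
    define i0 where "i0 = j - 1"
    have i0: "i0 \<in> {1..\<rho> - 1}" and ji: "j = i0 + 1" using j False unfolding i0_def by auto
    have fj: "f j \<noteq> 0" using nz j by auto
    have "tdeg (gcd (f j) (g j)) \<noteq> tdeg (f j)"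
    proof
      assume "tdeg (gcd (f j) (g j)) = tdeg (f j)"
      then have "f j dvd gcd (f j) (g j)" by (rule tdeg_dvd_eq[OF gcd_dvd1 fj])
      then show False using nj by (meson dvd_trans gcd_dvd2)
    qed
    then have lt: "tdeg (gcd (f (i0+1)) (g (i0+1))) < tdeg (f (i0+1))" using le[OF i0] ji by auto
    have "(\<Sum>i = 1..\<rho> - 1. tdeg (gcd (f (i+1)) (g (i+1)))) < (\<Sum>i = 1..\<rho> - 1. tdeg (f (i+1)))"
      by (rule sum_strict_mono_ex1) (use le lt i0 in auto)
    then show ?thesis using split by simp
  qed
qed


theorem lemma5p1:
  fixes A B :: "'a::{alg_closed_field,field_gcd} pencil"
    and p q :: nat and c d u v :: "nat list"
  assumes pA: "is_pencil p q A" and pB: "is_pencil p q B"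
    and kA: "kcf_minimal_indices p q A c u"
    and kB: "kcf_minimal_indices p q B d v"
  defines "\<rho>1 \<equiv> pencil_rank A" and "\<rho>2 \<equiv> pencil_rank B"
  defines "\<rho> \<equiv> min \<rho>1 \<rho>2"
  defines "\<phi> \<equiv> hom_inv_factor A" and "\<psi> \<equiv> hom_inv_factor B"
  defines "r \<equiv> (\<lambda>i. if i = 0 then q - \<rho>1 else conj_part c i)"
    and "s \<equiv> (\<lambda>i. if i = 0 then q - \<rho>2 else conj_part d i)"
    and "r' \<equiv> (\<lambda>i. if i = 0 then p - \<rho>1 else conj_part u i)"
    and "s' \<equiv> (\<lambda>i. if i = 0 then p - \<rho>2 else conj_part v i)"
  defines "x \<equiv> (LEAST i. r i \<noteq> s i)"
  defines "e \<equiv> int (LEAST j. x \<le> j \<and> r j \<le> s j) - 1"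
    and "e' \<equiv> int (LEAST j. x \<le> j \<and> s j \<le> r j) - 1"
  defines "G \<equiv> int \<rho> - 1 - (\<Sum>i = 1..\<rho> - 1. int (tdeg (gcd (\<phi> (i+1)) (\<psi> (i+1)))))
                 - (\<Sum>i = 1..\<rho>. int (r' i))"
  defines "D\<phi> \<equiv> (\<forall>j. 1 \<le> j \<and> j \<le> \<rho> \<longrightarrow> \<phi> j dvd \<psi> j)"
    and "D\<psi> \<equiv> (\<forall>j. 1 \<le> j \<and> j \<le> \<rho> \<longrightarrow> \<psi> j dvd \<phi> j)"
  assumes rs: "r \<noteq> s" and rs': "r' = s'"
    and G: "G \<le> (\<Sum>i = 1..\<rho>. int (min (r i) (s i))) + max e e'"
  shows "(e > e' \<longrightarrow>
            (\<forall>i::nat. x \<le> i \<and> int i \<le> e \<longrightarrow>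
               - int x - 1 \<le> int (s i) - int (r i) \<and> int (s i) - int (r i) \<le> -1 \<and>
               (int (s i) - int (r i) = - int x - 1 \<longrightarrow> D\<phi>)) \<and>
            (\<forall>i::nat. int i > e \<longrightarrow>
               - int x \<le> int (s i) - int (r i) \<and> int (s i) - int (r i) \<le> e + 1 \<and>
               (int (s i) - int (r i) = e + 1 \<longrightarrow> D\<psi>)))
       \<and> (e' > e \<longrightarrow>
            (\<forall>i::nat. x \<le> i \<and> int i \<le> e' \<longrightarrow>
               - int x - 1 \<le> int (r i) - int (s i) \<and> int (r i) - int (s i) \<le> -1 \<and>
               (int (r i) - int (s i) = - int x - 1 \<longrightarrow> D\<psi>)) \<and>
            (\<forall>i::nat. int i > e' \<longrightarrow>
               - int x \<le> int (r i) - int (s i) \<and> int (r i) - int (s i) \<le> e' + 1 \<and>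
               (int (r i) - int (s i) = e' + 1 \<longrightarrow> D\<phi>)))"
proof -
  obtain nA where rA: "\<rho>1 = sum_list c + sum_list u + nA" and rAp: "\<rho>1 \<le> p"
    and DA: "det_divisor (hom_pencil A) \<rho>1 \<noteq> 0" and tA: "tdeg (det_divisor (hom_pencil A) \<rho>1) \<le> nA"
    using pencil_facts[OF pA kA] unfolding \<rho>1_def by blast
  obtain nB where rB: "\<rho>2 = sum_list d + sum_list v + nB" and rBp: "\<rho>2 \<le> p"
    and DB: "det_divisor (hom_pencil B) \<rho>2 \<noteq> 0" and tB: "tdeg (det_divisor (hom_pencil B) \<rho>2) \<le> nB"
    using pencil_facts[OF pB kB] unfolding \<rho>2_def by blast
  have chA: "(\<forall>k. 1 \<le> k \<and> k \<le> \<rho>1 \<longrightarrow> \<phi> k \<noteq> 0) \<and> (\<Sum>i = 1..\<rho>1. tdeg (\<phi> i)) = tdeg (det_divisor (hom_pencil A) \<rho>1)"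
    using inv_factor_chain[OF pA] DA unfolding \<rho>1_def \<phi>_def by blast
  have chB: "(\<forall>k. 1 \<le> k \<and> k \<le> \<rho>2 \<longrightarrow> \<psi> k \<noteq> 0) \<and> (\<Sum>i = 1..\<rho>2. tdeg (\<psi> i)) = tdeg (det_divisor (hom_pencil B) \<rho>2)"
    using inv_factor_chain[OF pB] DB unfolding \<rho>2_def \<psi>_def by blast
  have r'0: "r' 0 = s' 0" using rs' by simp
  then have "p - \<rho>1 = p - \<rho>2" unfolding r'_def s'_def by simp
  then have r12: "\<rho>1 = \<rho>2" using rAp rBp by simp
  have \<rho>e1: "\<rho> = \<rho>1" and \<rho>e2: "\<rho> = \<rho>2" unfolding \<rho>_def using r12 by auto
  have nzA: "\<forall>k. 1 \<le> k \<and> k \<le> \<rho> \<longrightarrow> \<phi> k \<noteq> 0" using chA \<rho>e1 by simp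
  have nzB: "\<forall>k. 1 \<le> k \<and> k \<le> \<rho> \<longrightarrow> \<psi> k \<noteq> 0" using chB \<rho>e2 by simp
  have TA: "(\<Sum>i = 1..\<rho>. tdeg (\<phi> i)) \<le> nA" using chA tA \<rho>e1 by simp
  have TB: "(\<Sum>i = 1..\<rho>. tdeg (\<psi> i)) \<le> nB" using chB tB \<rho>e2 by simp
  define U where "U = (\<Sum>i = 1..\<rho>. r' i)"
  have Uu: "U \<le> sum_list u"
  proof -
    have "U = (\<Sum>i = 1..\<rho>. conj_part u i)" unfolding U_def r'_def by (rule sum.cong) auto
    then show ?thesis using conj_sum_le by metis
  qed
  have Uv: "U \<le> sum_list v"
  proof -
    have "U = (\<Sum>i = 1..\<rho>. s' i)" unfolding U_def using rs' by simp
    also have "\<dots> = (\<Sum>i = 1..\<rho>. conj_part v i)" unfolding s'_def by (rule sum.cong) auto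
    finally show ?thesis using conj_sum_le by metis
  qed
  have r00: "r 0 = s 0" unfolding r_def s_def using r12 by simp
  have ca: "sum_list c \<le> \<rho>" using rA \<rho>e1 by simp
  have db: "sum_list d \<le> \<rho>" using rB \<rho>e2 by simp
  have rsum: "(\<Sum>i = 1..\<rho>. r i) = sum_list c"
  proof -
    have "(\<Sum>i = 1..\<rho>. r i) = (\<Sum>i = 1..\<rho>. conj_part c i)" unfolding r_def by (rule sum.cong) auto
    then show ?thesis using conj_sum_eq[OF ca] by simp
  qed
  have ssum: "(\<Sum>i = 1..\<rho>. s i) = sum_list d"
  proof -
    have "(\<Sum>i = 1..\<rho>. s i) = (\<Sum>i = 1..\<rho>. conj_part d i)" unfolding s_def by (rule sum.cong) auto
    then show ?thesis using conj_sum_eq[OF db] by simp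
  qed
  have rz: "\<forall>i. 1 \<le> i \<longrightarrow> r i > 0 \<longrightarrow> i \<le> \<rho>"
  proof (intro allI impI)
    fix i :: nat assume i: "1 \<le> i" and i2: "r i > 0"
    then have "conj_part c i > 0" using i2 unfolding r_def by simp
    then have "i \<le> sum_list c" by (rule conj_part_pos)
    then show "i \<le> \<rho>" using ca by simp
  qed
  have sz: "\<forall>i. 1 \<le> i \<longrightarrow> s i > 0 \<longrightarrow> i \<le> \<rho>"
  proof (intro allI impI)
    fix i :: nat assume i: "1 \<le> i" and i2: "s i > 0"
    then have "conj_part d i > 0" using i2 unfolding s_def by simp
    then have "i \<le> sum_list d" by (rule conj_part_pos)
    then show "i \<le> \<rho>" using db by simp
  qed
  have r1: "\<rho> \<ge> 1"
  proof (rule ccontr)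
    assume "\<not> \<rho> \<ge> 1"
    then have z: "\<rho> = 0" by simp
    have "r = s"
    proof
      fix i show "r i = s i"
      proof (cases "i = 0")
        case True then show ?thesis using r00 by simp
      next
        case False
        then have "r i = 0" "s i = 0" using rz sz z by fastforce+
        then show ?thesis by simp
      qed
    qed
    then show False using rs by simp
  qed
  define Sn where "Sn = (\<Sum>i = 1..\<rho> - 1. tdeg (gcd (\<phi> (i+1)) (\<psi> (i+1))))"
  have Ge: "G = int \<rho> - 1 - int Sn - int U"
    unfolding G_def Sn_def U_def by (simp add: of_nat_sum)
  have SnA: "Sn \<le> (\<Sum>i = 1..\<rho>. tdeg (\<phi> i))" unfolding Sn_def by (rule S_bound(1)[OF nzA r1])
  have SnA': "\<not> D\<phi> \<Longrightarrow> Sn + 1 \<le> (\<Sum>i = 1..\<rho>. tdeg (\<phi> i))"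
    unfolding Sn_def D\<phi>_def by (rule S_bound(2)[OF nzA r1])
  have Sn_sym: "Sn = (\<Sum>i = 1..\<rho> - 1. tdeg (gcd (\<psi> (i+1)) (\<phi> (i+1))))"
    unfolding Sn_def by (simp add: gcd.commute)
  have SnB: "Sn \<le> (\<Sum>i = 1..\<rho>. tdeg (\<psi> i))" unfolding Sn_sym by (rule S_bound(1)[OF nzB r1])
  have SnB': "\<not> D\<psi> \<Longrightarrow> Sn + 1 \<le> (\<Sum>i = 1..\<rho>. tdeg (\<psi> i))"
    unfolding Sn_sym D\<psi>_def by (rule S_bound(2)[OF nzB r1])
  have Ga: "G \<ge> int (sum_list c) - 1" using Ge SnA TA Uu rA \<rho>e1 by simp
  have Gb: "G \<ge> int (sum_list d) - 1" using Ge SnB TB Uv rB \<rho>e2 by simp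
  have Gp: "\<not> D\<phi> \<longrightarrow> G \<ge> int (sum_list c)" using Ge SnA' TA Uu rA \<rho>e1 by fastforce
  have Gq: "\<not> D\<psi> \<longrightarrow> G \<ge> int (sum_list d)" using Ge SnB' TB Uv rB \<rho>e2 by fastforce
  have exi: "\<exists>i. r i \<noteq> s i" using rs by auto
  have rxs: "r x \<noteq> s x" unfolding x_def using LeastI_ex[OF exi] .
  have xsym: "(LEAST i. s i \<noteq> r i) = x" unfolding x_def by (simp add: eq_commute)
  show ?thesis
  proof (cases "r x > s x")
    case True
    note C = comb[OF rsum ssum rz sz r00 rs, of G D\<phi> D\<psi>, folded x_def, folded e_def e'_def, OF G Ga Gb Gp Gq True]
    then show ?thesis by auto
  next
    case False
    then have sx: "s x > r x" using rxs by simp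
    have G': "G \<le> (\<Sum>i = 1..\<rho>. int (min (s i) (r i))) + max e' e"
      using G by (simp add: min.commute max.commute)
    have rs2: "s \<noteq> r" using rs by metis
    note C = comb[OF ssum rsum sz rz r00[symmetric] rs2, of G D\<psi> D\<phi>, unfolded xsym, folded e_def e'_def, OF G' Gb Ga Gq Gp sx]
    then show ?thesis by auto
  qed
qed


end
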